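(* Define $f_1:\mathrm{Aut}_*(H)\to k^{\mathbb{Z}}$ by $f_1(\phi)=(\beta_n)_{n\in\mathbb{Z}}$, where $\phi(x^ny)=x^ny+\beta_n(x^{n+1}-x^n)$ for all $n\in\mathbb{Z}$. Then $f_1$ is a group epimorphism onto the additive group $k^{\mathbb{Z}}$ with kernel $\mathrm{Aut}_1(H)$; that is, $1\to\mathrm{Aut}_1(H)\hookrightarrow\mathrm{Aut}_*(H)\xrightarrow{f_1}k^{\mathbb{Z}}\to0$ is an exact sequence of groups.
   Context: Let $k$ be a field and $0\neq q\in k$ not a root of unity. $H=k_q[x,x^{-1},y]$ is the $k$-algebra generated by $x,x^{-1},y$ with $xx^{-1}=x^{-1}x=1$, $yx=qxy$, a Hopf algebra with $\Delta(x)=x\otimes x$, $\Delta(y)=y\otimes x+1\otimes y$, $\varepsilon(x)=1$, $\varepsilon(y)=0$; $\{x^ny^m:n\in\mathbb{Z},m\in\mathbb{N}\}$ is a $k$-basis. $k^{\mathbb{Z}}$ is the group of sequences in $k$ under componentwise addition. $\mathrm{Aut}_c(H)$ is the group under composition of coalgebra automorphisms of $H$; $\mathrm{Aut}_*(H)$ is the set of $\phi\in\mathrm{Aut}_c(H)$ with $\phi(x^n)=x^n$ for all $n$ such that for each $n$ there is (a necessarily unique) $\beta_n\in k$ with $\phi(x^ny)=x^ny+\beta_n(x^{n+1}-x^n)$. Let $H_0=\mathrm{span}\{x^n\}$, $H(m)=H_0y^m$, and $\mathrm{Aut}_1(H)=\{\phi\in\mathrm{Aut}_c(H):\phi(h)=h\text{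 for all }h\in H(0)+H(1)\}$. *)

theory Defs
  imports "HOL-Algebra.Coset" "HOL-Library.FuncSet"
begin

text \<open>The Hopf algebra H = k_q[x,x^-1,y] with basis x^n y^m, (n,m) in Z x N.
  An element of H (x) H is a finitely supported coefficient function on pairs
  of basis indices (basis x^a y^b (x) x^c y^d).\<close>

type_synonym idx = "int \<times> nat"
type_synonym 'a hq = "idx \<Rightarrow> 'a"
type_synonym 'a hq2 = "idx \<times> idx \<Rightarrow> 'a"

definition supp :: "('b \<Rightarrow> 'a::zero) \<Rightarrow> 'b set" where
  "supp f = {b. f b \<noteq> 0}"

definition Hc :: "('a::field) hq set" where
  "Hc = {h. finite (supp h)}"

definition T2 :: "('a::field) hq2 set" where
  "T2 = {t. finite (supp t)}"

definition bas :: "idx \<Rightarrow> ('a::field) hq" where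
  "bas b = (\<lambda>c. if c = b then 1 else 0)"

definition hadd :: "('b \<Rightarrow> 'a::field) \<Rightarrow> ('b \<Rightarrow> 'a) \<Rightarrow> 'b \<Rightarrow> 'a" where
  "hadd u v = (\<lambda>c. u c + v c)"

definition hsub :: "('b \<Rightarrow> 'a::field) \<Rightarrow> ('b \<Rightarrow> 'a) \<Rightarrow> 'b \<Rightarrow> 'a" where
  "hsub u v = (\<lambda>c. u c - v c)"

definition hscale :: "'a::field \<Rightarrow> ('b \<Rightarrow> 'a) \<Rightarrow> 'b \<Rightarrow> 'a" where
  "hscale s u = (\<lambda>c. s * u c)"

definition tens :: "('a::field) hq \<Rightarrow> 'a hq \<Rightarrow> 'a hq2" where
  "tens u v = (\<lambda>(b, c). u b * v c)"

text \<open>Multiplication of basis elements of H (x) H using yx = qxy in each factor: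
  (x^a1 y^b1 (x) x^c1 y^d1)(x^a2 y^b2 (x) x^c2 y^d2)
    = q^(b1 a2 + d1 c2) x^(a1+a2) y^(b1+b2) (x) x^(c1+c2) y^(d1+d2).\<close>
definition tmono_idx :: "idx \<times> idx \<Rightarrow> idx \<times> idx \<Rightarrow> idx \<times> idx" where
  "tmono_idx s t = (case s of ((a1, b1), (c1, d1)) \<Rightarrow> case t of ((a2, b2), (c2, d2)) \<Rightarrow>
      ((a1 + a2, b1 + b2), (c1 + c2, d1 + d2)))"

definition tmono_coef :: "'a::field \<Rightarrow> idx \<times> idx \<Rightarrow> idx \<times> idx \<Rightarrow> 'a" where
  "tmono_coef q s t = (case s of ((a1, b1), (c1, d1)) \<Rightarrow> case t of ((a2, b2), (c2, d2)) \<Rightarrow>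
      q powi (int b1 * a2 + int d1 * c2))"

definition tmul :: "'a::field \<Rightarrow> 'a hq2 \<Rightarrow> 'a hq2 \<Rightarrow> 'a hq2" where
  "tmul q s t = (\<lambda>p. \<Sum>(a, b) \<in> supp s \<times> supp t.
      if tmono_idx a b = p then s a * t b * tmono_coef q a b else 0)"

primrec tpow :: "'a::field \<Rightarrow> 'a hq2 \<Rightarrow> nat \<Rightarrow> 'a hq2" where
  "tpow q t 0 = tens (bas (0, 0)) (bas (0, 0))"
| "tpow q t (Suc m) = tmul q (tpow q t m) t"

definition Delta_y :: "('a::field) hq2" where
  "Delta_y = hadd (tens (bas (0, 1)) (bas (1, 0))) (tens (bas (0, 0)) (bas (0, 1)))"

text \<open>Delta(x^n y^m) = Delta(x)^n Delta(y)^m, with Delta(x^n) = x^n (x) x^n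
  (Delta is an algebra map with Delta(x) = x (x) x, hence Delta(x^-1) = x^-1 (x) x^-1).\<close>
definition Delta_bas :: "'a::field \<Rightarrow> idx \<Rightarrow> 'a hq2" where
  "Delta_bas q b = (case b of (n, m) \<Rightarrow>
      tmul q (tens (bas (n, 0)) (bas (n, 0))) (tpow q Delta_y m))"

definition Delta :: "'a::field \<Rightarrow> 'a hq \<Rightarrow> 'a hq2" where
  "Delta q h = (\<lambda>p. \<Sum>b \<in> supp h. h b * Delta_bas q b p)"

definition eps :: "('a::field) hq \<Rightarrow> 'a" where
  "eps h = (\<Sum>n \<in> {n. h (n, 0) \<noteq> 0}. h (n, 0))"

definition tmap :: "('a::field hq \<Rightarrow> 'a hq) \<Rightarrow> ('a hq \<Rightarrow> 'a hq) \<Rightarrow> 'a hq2 \<Rightarrow> 'a hq2" where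
  "tmap \<phi> \<psi> t = (\<lambda>p. \<Sum>(b, c) \<in> supp t. t (b, c) * tens (\<phi> (bas b)) (\<psi> (bas c)) p)"

definition linear_H :: "('a::field hq \<Rightarrow> 'a hq) \<Rightarrow> bool" where
  "linear_H \<phi> \<longleftrightarrow> (\<forall>u\<in>Hc. \<forall>v\<in>Hc. \<phi> (hadd u v) = hadd (\<phi> u) (\<phi> v))
                   \<and> (\<forall>s. \<forall>u\<in>Hc. \<phi> (hscale s u) = hscale s (\<phi> u))"

text \<open>Maps are taken extensional (undefined outside H) so that
  they are determined by their action on H, as in HOL-Algebra's BijGroup.\<close>
definition Aut_c :: "'a::field \<Rightarrow> ('a hq \<Rightarrow> 'a hq) set" where
  "Aut_c q = {\<phi>. \<phi> \<in> extensional Hc \<and> bij_betw \<phi> Hc Hc \<and> linear_H \<phi>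
      \<and> (\<forall>h\<in>Hc. Delta q (\<phi> h) = tmap \<phi> \<phi> (Delta q h))
      \<and> (\<forall>h\<in>Hc. eps (\<phi> h) = eps h)}"

definition AutcGroup :: "'a::field \<Rightarrow> ('a hq \<Rightarrow> 'a hq) monoid" where
  "AutcGroup q = \<lparr>carrier = Aut_c q,
      mult = (\<lambda>\<phi> \<psi>. compose Hc \<phi> \<psi>),
      one = (\<lambda>h\<in>Hc. h)\<rparr>"

definition Aut_star :: "'a::field \<Rightarrow> ('a hq \<Rightarrow> 'a hq) set" where
  "Aut_star q = {\<phi> \<in> Aut_c q. (\<forall>n. \<phi> (bas (n, 0)) = bas (n, 0))
      \<and> (\<forall>n. \<exists>\<beta>. \<phi> (bas (n, 1)) =
             hadd (bas (n, 1)) (hscale \<beta> (hsub (bas (n + 1, 0)) (bas (n, 0)))))}"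

text \<open>H(0) + H(1) = span of x^n and x^n y\<close>
definition H01 :: "('a::field) hq set" where
  "H01 = {h \<in> Hc. \<forall>n m. 2 \<le> m \<longrightarrow> h (n, m) = 0}"

definition Aut_1 :: "'a::field \<Rightarrow> ('a hq \<Rightarrow> 'a hq) set" where
  "Aut_1 q = {\<phi> \<in> Aut_c q. \<forall>h\<in>H01. \<phi> h = h}"

definition f1 :: "('a::field hq \<Rightarrow> 'a hq) \<Rightarrow> int \<Rightarrow> 'a" where
  "f1 \<phi> = (\<lambda>n. THE \<beta>. \<phi> (bas (n, 1)) =
             hadd (bas (n, 1)) (hscale \<beta> (hsub (bas (n + 1, 0)) (bas (n, 0)))))"

definition SeqGroup :: "(int \<Rightarrow> 'a::field) monoid" where
  "SeqGroup = \<lparr>carrier = UNIV, mult = (\<lambda>\<alpha> \<beta> n. \<alpha> n + \<beta> n), one = (\<lambda>n. 0)\<rparr>"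

end

theory Submission
  imports Defs
begin


lemma supp_iff: "b \<in> supp f \<longleftrightarrow> f b \<noteq> 0" by (simp add: supp_def)

lemma supp_bas[simp]: "supp (bas b :: 'a::field hq) = {b}"
  by (auto simp: supp_def bas_def)

lemma bas_Hc[simp]: "(bas b :: 'a::field hq) \<in> Hc"
  by (simp add: Hc_def)

lemma Hc_finite: "h \<in> Hc \<Longrightarrow> finite (supp h)" by (simp add: Hc_def)

lemma hadd_Hc: "hadd u v \<in> Hc" if "u \<in> Hc" "v \<in> Hc"
proof -
  have "supp (hadd u v) \<subseteq> supp u \<union> supp v" by (auto simp: supp_def hadd_def)
  thus ?thesis using that by (auto simp: Hc_def intro: finite_subset)
qed

lemma hscale_Hc: "hscale s u \<in> Hc" if "u \<in> Hc"
proof -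
  have "supp (hscale s u) \<subseteq> supp u" by (auto simp: supp_def hscale_def)
  thus ?thesis using that by (auto simp: Hc_def intro: finite_subset)
qed

lemma hsub_Hc: "hsub u v \<in> Hc" if "u \<in> Hc" "v \<in> Hc"
proof -
  have "supp (hsub u v) \<subseteq> supp u \<union> supp v" by (auto simp: supp_def hsub_def)
  thus ?thesis using that by (auto simp: Hc_def intro: finite_subset)
qed

lemma zero_Hc: "(\<lambda>_. 0 :: 'a::field) \<in> Hc" by (simp add: Hc_def supp_def)

lemma lin_add: "linear_H \<phi> \<Longrightarrow> u \<in> Hc \<Longrightarrow> v \<in> Hc \<Longrightarrow> \<phi> (hadd u v) = hadd (\<phi> u) (\<phi> v)"
  unfolding linear_H_def by blast

lemma lin_scale: "linear_H \<phi> \<Longrightarrow> u \<in> Hc \<Longrightarrow> \<phi> (hscale s u) = hscale s (\<phi> u)"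
  unfolding linear_H_def by blast

lemma lin_sub: "linear_H \<phi> \<Longrightarrow> u \<in> Hc \<Longrightarrow> v \<in> Hc \<Longrightarrow> \<phi> (hsub u v) = hsub (\<phi> u) (\<phi> v)"
proof -
  assume l: "linear_H \<phi>" and u: "u \<in> Hc" and v: "v \<in> Hc"
  have e: "hsub u v = hadd u (hscale (-1) v)" by (simp add: hsub_def hadd_def hscale_def)
  have "\<phi> (hsub u v) = hadd (\<phi> u) (hscale (-1) (\<phi> v))"
    unfolding e using lin_add[OF l u hscale_Hc[OF v]] lin_scale[OF l v] by simp
  thus ?thesis by (simp add: hsub_def hadd_def hscale_def)
qed

lemma lin_zero:
  assumes "linear_H \<phi>" shows "\<phi> (\<lambda>_. 0) = (\<lambda>_. 0)"
proof -
  have "\<phi> (hscale 0 (\<lambda>_. 0)) = hscale 0 (\<phi> (\<lambda>_. 0))"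
    using assms zero_Hc unfolding linear_H_def by blast
  thus ?thesis by (simp add: hscale_def)
qed

lemma lin_expand_aux:
  fixes \<phi> :: "'a::field hq \<Rightarrow> 'a hq"
  assumes lin: "linear_H \<phi>" and S: "finite S"
  shows "supp h \<subseteq> S \<Longrightarrow> \<phi> h = (\<lambda>p. \<Sum>b\<in>S. h b * \<phi> (bas b) p)"
  using S
proof (induction S arbitrary: h rule: finite_induct)
  case empty
  hence "h = (\<lambda>_. 0)" by (auto simp: supp_def)
  thus ?case using lin_zero[OF lin] by simp
next
  case (insert x S)
  define h' where "h' = h(x := 0)"
  have s': "supp h' \<subseteq> S" using insert.prems by (auto simp: supp_def h'_def)
  have fin: "finite (supp h')" using s' insert.hyps(1) finite_subset by blast
  have h'Hc: "h' \<in> Hc" using fin by (simp add: Hc_def)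
  have hdec: "h = hadd h' (hscale (h x) (bas x))"
    by (auto simp: h'_def hadd_def hscale_def bas_def)
  have "\<phi> h = hadd (\<phi> h') (\<phi> (hscale (h x) (bas x)))"
    using lin_add[OF lin h'Hc hscale_Hc[OF bas_Hc]] hdec by metis
  also have "\<phi> (hscale (h x) (bas x)) = hscale (h x) (\<phi> (bas x))"
    using lin_scale[OF lin bas_Hc] by simp
  finally have eq: "\<phi> h = hadd (\<phi> h') (hscale (h x) (\<phi> (bas x)))" .
  have hh: "h' b = h b" if "b \<in> S" for b using that insert.hyps(2) by (auto simp: h'_def)
  show ?case
  proof
    fix p
    have "\<phi> h p = \<phi> h' p + h x * \<phi> (bas x) p" using eq by (simp add: hadd_def hscale_def)
    also have "\<phi> h' p = (\<Sum>b\<in>S. h b * \<phi> (bas b) p)"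
      using insert.IH[OF s'] hh by simp
    finally show "\<phi> h p = (\<Sum>b\<in>insert x S. h b * \<phi> (bas b) p)"
      using insert.hyps by (simp add: add.commute)
  qed
qed

definition good :: "('a::field hq \<Rightarrow> 'a hq) \<Rightarrow> bool" where
  "good \<phi> \<longleftrightarrow> linear_H \<phi> \<and> (\<forall>h\<in>Hc. \<phi> h \<in> Hc)"

lemma lin_expand:
  "linear_H \<phi> \<Longrightarrow> finite S \<Longrightarrow> supp h \<subseteq> S \<Longrightarrow> \<phi> h p = (\<Sum>b\<in>S. h b * \<phi> (bas b) p)"
  using lin_expand_aux by metis

lemma tmap_superset:
  assumes "finite S" "supp t \<subseteq> S"
  shows "tmap \<phi> \<psi> t p = (\<Sum>x\<in>S. t x * \<phi> (bas (fst x)) (fst p) * \<psi> (bas (snd x)) (snd p))"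
proof -
  have "tmap \<phi> \<psi> t p = (\<Sum>x\<in>supp t. t x * \<phi> (bas (fst x)) (fst p) * \<psi> (bas (snd x)) (snd p))"
    unfolding tmap_def tens_def by (simp add: case_prod_beta mult.assoc)
  also have "\<dots> = (\<Sum>x\<in>S. t x * \<phi> (bas (fst x)) (fst p) * \<psi> (bas (snd x)) (snd p))"
    by (rule sum.mono_neutral_left[OF assms]) (auto simp: supp_def)
  finally show ?thesis .
qed

lemma tmap_cong:
  assumes "\<And>b. f (bas b) = f' (bas b)" "\<And>b. g (bas b) = g' (bas b)"
  shows "tmap f g = tmap f' g'"
  unfolding tmap_def using assms by simp

lemma tmap_T2:
  assumes "good \<phi>" "good \<psi>" "t \<in> T2"
  shows "tmap \<phi> \<psi> t \<in> T2"
proof -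
  let ?B = "\<Union>x\<in>supp t. supp (\<phi> (bas (fst x))) \<times> supp (\<psi> (bas (snd x)))"
  have ft: "finite (supp t)" using assms(3) by (simp add: T2_def)
  have fB: "finite ?B"
    using ft assms(1,2) by (auto simp: good_def Hc_def intro!: finite_cartesian_product)
  have "supp (tmap \<phi> \<psi> t) \<subseteq> ?B"
  proof
    fix p assume "p \<in> supp (tmap \<phi> \<psi> t)"
    hence "tmap \<phi> \<psi> t p \<noteq> 0" by (simp add: supp_def)
    hence "(\<Sum>x\<in>supp t. t x * \<phi> (bas (fst x)) (fst p) * \<psi> (bas (snd x)) (snd p)) \<noteq> 0"
      using tmap_superset[OF ft order_refl] by simp
    then obtain x where "x \<in> supp t" "t x * \<phi> (bas (fst x)) (fst p) * \<psi> (bas (snd x)) (snd p) \<noteq> 0"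
      by (meson sum.not_neutral_contains_not_neutral)
    hence "p \<in> supp (\<phi> (bas (fst x))) \<times> supp (\<psi> (bas (snd x)))" "x \<in> supp t"
      by (auto simp: supp_def mem_Times_iff)
    thus "p \<in> ?B" by blast
  qed
  thus ?thesis using fB by (simp add: T2_def finite_subset)
qed

lemma tmap_id:
  assumes "t \<in> T2"
  shows "tmap (\<lambda>h\<in>Hc. h) (\<lambda>h\<in>Hc. h) t = t"
proof
  fix p
  have ft: "finite (supp t)" using assms by (simp add: T2_def)
  have "tmap (\<lambda>h\<in>Hc. h) (\<lambda>h\<in>Hc. h) t p = (\<Sum>x\<in>supp t. t x * bas (fst x) (fst p) * bas (snd x) (snd p))"
    using tmap_superset[OF ft order_refl] by simp
  also have "\<dots> = (\<Sum>x\<in>supp t. if x = p then t x else 0)"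
    by (rule sum.cong) (auto simp: bas_def prod_eq_iff)
  also have "\<dots> = t p" using ft by (simp add: sum.delta') (auto simp: supp_def)
  finally show "tmap (\<lambda>h\<in>Hc. h) (\<lambda>h\<in>Hc. h) t p = t p" .
qed

lemma tmap_comp:
  assumes gp: "good \<phi>" and gs: "good \<psi>" and t: "t \<in> T2"
  shows "tmap \<phi> \<phi> (tmap \<psi> \<psi> t) = tmap (\<lambda>h. \<phi> (\<psi> h)) (\<lambda>h. \<phi> (\<psi> h)) t"
proof
  fix p
  define S where "S = supp t"
  have fS: "finite S" using t by (simp add: T2_def S_def)
  define N where "N b = \<psi> (bas b)" for b
  define M where "M b = \<phi> (bas b)" for b
  define B where "B = (\<Union>x\<in>S. supp (N (fst x)) \<union> supp (N (snd x)))"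
  have NHc: "N b \<in> Hc" for b using gs by (simp add: good_def N_def)
  have fB: "finite B" unfolding B_def using fS NHc by (auto simp: Hc_def)
  have NB1: "supp (N (fst x)) \<subseteq> B" if "x \<in> S" for x using that by (auto simp: B_def)
  have NB2: "supp (N (snd x)) \<subseteq> B" if "x \<in> S" for x using that by (auto simp: B_def)
  have lp: "linear_H \<phi>" using gp by (simp add: good_def)
  have tm: "tmap \<psi> \<psi> t y = (\<Sum>x\<in>S. t x * N (fst x) (fst y) * N (snd x) (snd y))" for y
    unfolding S_def N_def by (rule tmap_superset[OF _ order_refl]) (use fS S_def in simp)
  have sub: "supp (tmap \<psi> \<psi> t) \<subseteq> B \<times> B"
  proof
    fix y assume "y \<in> supp (tmap \<psi> \<psi> t)"
    hence "(\<Sum>x\<in>S. t x * N (fst x) (fst y) * N (snd x) (snd y)) \<noteq> 0" using tm by (simp add: supp_def)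
    then obtain x where x: "x \<in> S" "t x * N (fst x) (fst y) * N (snd x) (snd y) \<noteq> 0"
      by (meson sum.not_neutral_contains_not_neutral)
    hence "fst y \<in> supp (N (fst x))" "snd y \<in> supp (N (snd x))" by (auto simp: supp_def)
    thus "y \<in> B \<times> B" using NB1[OF x(1)] NB2[OF x(1)] by (auto simp: mem_Times_iff)
  qed
  have "tmap \<phi> \<phi> (tmap \<psi> \<psi> t) p = (\<Sum>y\<in>B \<times> B. tmap \<psi> \<psi> t y * M (fst y) (fst p) * M (snd y) (snd p))"
    unfolding M_def by (rule tmap_superset[OF _ sub]) (use fB in simp)
  also have "\<dots> = (\<Sum>y\<in>B \<times> B. \<Sum>x\<in>S. t x * (N (fst x) (fst y) * M (fst y) (fst p)) * (N (snd x) (snd y) * M (snd y) (snd p)))"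
    unfolding tm sum_distrib_right by (simp add: mult_ac)
  also have "\<dots> = (\<Sum>x\<in>S. \<Sum>y\<in>B \<times> B. t x * (N (fst x) (fst y) * M (fst y) (fst p)) * (N (snd x) (snd y) * M (snd y) (snd p)))"
    by (rule sum.swap)
  also have "\<dots> = (\<Sum>x\<in>S. t x * (\<Sum>b\<in>B. N (fst x) b * M b (fst p)) * (\<Sum>c\<in>B. N (snd x) c * M c (snd p)))"
  proof (rule sum.cong[OF refl])
    fix x assume "x \<in> S"
    have "(\<Sum>y\<in>B \<times> B. t x * (N (fst x) (fst y) * M (fst y) (fst p)) * (N (snd x) (snd y) * M (snd y) (snd p)))
       = t x * (\<Sum>y\<in>B \<times> B. (N (fst x) (fst y) * M (fst y) (fst p)) * (N (snd x) (snd y) * M (snd y) (snd p)))"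
      by (simp add: sum_distrib_left mult_ac)
    also have "(\<Sum>y\<in>B \<times> B. (N (fst x) (fst y) * M (fst y) (fst p)) * (N (snd x) (snd y) * M (snd y) (snd p)))
       = (\<Sum>b\<in>B. N (fst x) b * M b (fst p)) * (\<Sum>c\<in>B. N (snd x) c * M c (snd p))"
      by (simp add: sum_product sum.cartesian_product case_prod_beta)
    finally show "(\<Sum>y\<in>B \<times> B. t x * (N (fst x) (fst y) * M (fst y) (fst p)) * (N (snd x) (snd y) * M (snd y) (snd p)))
       = t x * (\<Sum>b\<in>B. N (fst x) b * M b (fst p)) * (\<Sum>c\<in>B. N (snd x) c * M c (snd p))"
      by (simp add: mult.assoc)
  qed
  also have "\<dots> = (\<Sum>x\<in>S. t x * \<phi> (\<psi> (bas (fst x))) (fst p) * \<phi> (\<psi> (bas (snd x))) (snd p))"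
  proof (rule sum.cong[OF refl])
    fix x assume x: "x \<in> S"
    show "t x * (\<Sum>b\<in>B. N (fst x) b * M b (fst p)) * (\<Sum>c\<in>B. N (snd x) c * M c (snd p))
        = t x * \<phi> (\<psi> (bas (fst x))) (fst p) * \<phi> (\<psi> (bas (snd x))) (snd p)"
      using lin_expand[OF lp fB NB1[OF x], of "fst p"] lin_expand[OF lp fB NB2[OF x], of "snd p"]
      by (simp add: N_def M_def)
  qed
  also have "\<dots> = tmap (\<lambda>h. \<phi> (\<psi> h)) (\<lambda>h. \<phi> (\<psi> h)) t p"
    by (rule tmap_superset[symmetric]) (use fS S_def in auto)
  finally show "tmap \<phi> \<phi> (tmap \<psi> \<psi> t) p = tmap (\<lambda>h. \<phi> (\<psi> h)) (\<lambda>h. \<phi> (\<psi> h)) t p" .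
qed


section \<open>q-numbers\<close>

definition qok :: "'a::field \<Rightarrow> bool" where
  "qok q \<longleftrightarrow> q \<noteq> 0 \<and> (\<forall>n::nat. n > 0 \<longrightarrow> q ^ n \<noteq> 1)"

definition qn :: "'a::field \<Rightarrow> nat \<Rightarrow> 'a" where "qn q k = (\<Sum>l<k. q ^ l)"
definition qf :: "'a::field \<Rightarrow> nat \<Rightarrow> 'a" where "qf q k = (\<Prod>j\<in>{1..k}. qn q j)"
definition qb :: "'a::field \<Rightarrow> nat \<Rightarrow> nat \<Rightarrow> 'a" where "qb q i j = qf q (i + j) / (qf q i * qf q j)"

lemma qf_0[simp]: "qf q 0 = 1" by (simp add: qf_def)
lemma qf_Suc: "qf q (Suc k) = qf q k * qn q (Suc k)"
  by (simp add: qf_def prod.nat_ivl_Suc' mult.commute)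
lemma qn_1[simp]: "qn q 1 = 1" by (simp add: qn_def)
lemma qf_1[simp]: "qf q 1 = 1" by (simp add: qf_def qn_def)

lemma qn_nz: assumes "qok q" "k > 0" shows "qn q k \<noteq> 0"
proof
  assume "qn q k = 0"
  hence "1 - q ^ k = 0" using one_diff_power_eq[of q k] by (simp add: qn_def)
  thus False using assms by (simp add: qok_def)
qed

lemma qf_nz: assumes "qok q" shows "qf q k \<noteq> 0"
  unfolding qf_def using qn_nz[OF assms] by (auto simp: prod_zero_iff)

lemma qn_add: "qn q (a + b) = qn q a + q ^ a * qn q b"
  by (induction b) (simp_all add: qn_def power_add algebra_simps)

lemma qb_0_left[simp]: "qok q \<Longrightarrow> qb q 0 j = 1" by (simp add: qb_def qf_nz)
lemma qb_0_right[simp]: "qok q \<Longrightarrow> qb q i 0 = 1" by (simp add: qb_def qf_nz)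

lemma aux_field1:
  fixes F C qi qj A B :: "'a::field"
  assumes "qi \<noteq> 0" "qj \<noteq> 0" "A \<noteq> 0" "B \<noteq> 0"
  shows "F * C / (qi * B * (qj * A)) = F / (qi * qj) * C / (B * A)"
  by (simp add: divide_inverse mult_ac inverse_mult_distrib)

lemma aux_field2:
  fixes X A B Q :: "'a::field"
  assumes "A \<noteq> 0" "B \<noteq> 0"
  shows "X * (A + Q * B) / (B * A) = X / A * Q + X / B"
proof -
  have "X / A * Q + X / B = (X * Q) / A + X / B" by simp
  also have "\<dots> = (X * Q * B + X * A) / (A * B)" using assms by (rule add_frac_eq)
  also have "X * Q * B + X * A = X * (A + Q * B)" by (simp only: distrib_left mult_ac add.commute)
  also have "A * B = B * A" by (rule mult.commute)
  finally show ?thesis by simp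
qed

lemma qb_rec:
  assumes "qok q"
  shows "qb q (Suc i) (Suc j) = qb q i (Suc j) * q ^ Suc j + qb q (Suc i) j"
proof -
  define X where "X = qf q (Suc (i + j)) / (qf q i * qf q j)"
  define A where "A = qn q (Suc j)"
  define B where "B = qn q (Suc i)"
  have nzA: "A \<noteq> 0" and nzB: "B \<noteq> 0" using qn_nz[OF assms] by (auto simp: A_def B_def)
  have nz: "qf q i \<noteq> 0" "qf q j \<noteq> 0" using qf_nz[OF assms] by auto
  have e1: "qb q (Suc i) (Suc j) = X * (A + q ^ Suc j * B) / (B * A)"
  proof -
    have "qf q (Suc i + Suc j) = qf q (Suc (Suc (i + j)))" by simp
    also have "\<dots> = qf q (Suc (i + j)) * qn q (Suc j + Suc i)"
      by (simp only: qf_Suc add.commute add_Suc_right add_Suc)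
    also have "qn q (Suc j + Suc i) = A + q ^ Suc j * B" by (simp only: qn_add A_def B_def)
    finally have 1: "qf q (Suc i + Suc j) = qf q (Suc (i + j)) * (A + q ^ Suc j * B)" .
    have 2: "qf q (Suc i) = qf q i * B" "qf q (Suc j) = qf q j * A" by (simp_all only: A_def B_def qf_Suc)
    show ?thesis unfolding qb_def 1 2 X_def by (rule aux_field1[OF nz nzA nzB])
  qed
  have e2: "qb q i (Suc j) = X / A"
  proof -
    have "qf q (i + Suc j) = qf q (Suc (i+j))" by simp
    moreover have "qf q (Suc j) = qf q j * A" by (simp only: A_def qf_Suc)
    ultimately show ?thesis by (simp only: qb_def X_def divide_divide_eq_left mult.assoc)
  qed
  have e3: "qb q (Suc i) j = X / B"
  proof -
    have "qf q (Suc i + j) = qf q (Suc (i+j))" by simp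
    moreover have "qf q (Suc i) = qf q i * B" by (simp only: B_def qf_Suc)
    ultimately show ?thesis by (simp only: qb_def X_def divide_divide_eq_left mult.assoc mult.commute[of B "qf q j"])
  qed
  have "X * (A + q ^ Suc j * B) / (B * A) = X / A * q ^ Suc j + X / B"
    by (rule aux_field2[OF nzA nzB])
  thus ?thesis using e1 e2 e3 by simp
qed

lemma sum_if_unique:
  assumes "finite A" "\<And>i. i \<in> A \<Longrightarrow> P i \<Longrightarrow> i = k"
  shows "(\<Sum>i\<in>A. if P i then v i else 0) = (if k \<in> A \<and> P k then v k else 0)"
proof -
  have "(\<Sum>i\<in>A. if P i then v i else 0) = (\<Sum>i\<in>A. if i = k then (if P k then v k else 0) else 0)"
  proof (rule sum.cong[OF refl])
    fix i assume i: "i \<in> A"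
    show "(if P i then v i else 0) = (if i = k then (if P k then v k else 0) else 0)"
    proof (cases "i = k")
      case True thus ?thesis by simp
    next
      case False
      hence "\<not> P i" using assms(2)[OF i] by blast
      thus ?thesis using False by simp
    qed
  qed
  also have "\<dots> = (if k \<in> A \<and> P k then v k else 0)" using assms(1) by (simp add: sum.delta')
  finally show ?thesis .
qed



section \<open>Explicit comultiplication\<close>

lemma tmul_superset:
  assumes "finite A" "supp s \<subseteq> A" "finite B" "supp t \<subseteq> B"
  shows "tmul q s t p = (\<Sum>x\<in>A. \<Sum>y\<in>B. if tmono_idx x y = p then s x * t y * tmono_coef q x y else 0)"
proof -
  have "tmul q s t p = (\<Sum>z\<in>supp s \<times> supp t. if tmono_idx (fst z) (snd z) = p then s (fst z) * t (snd z) * tmono_coef q (fst z) (snd z) else 0)"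
    unfolding tmul_def by (simp add: case_prod_beta)
  also have "\<dots> = (\<Sum>z\<in>A \<times> B. if tmono_idx (fst z) (snd z) = p then s (fst z) * t (snd z) * tmono_coef q (fst z) (snd z) else 0)"
    by (rule sum.mono_neutral_left) (use assms in \<open>auto simp: supp_def\<close>)
  also have "\<dots> = (\<Sum>x\<in>A. \<Sum>y\<in>B. if tmono_idx x y = p then s x * t y * tmono_coef q x y else 0)"
    by (simp add: sum.cartesian_product case_prod_beta)
  finally show ?thesis .
qed

lemma Delta_y_apply: "Delta_y p = (if p = ((0,1),(1,0)) \<or> p = ((0,0),(0,1)) then 1 else 0)"
  by (auto simp: Delta_y_def hadd_def tens_def bas_def case_prod_beta prod_eq_iff)

lemma supp_Delta_y: "supp (Delta_y :: 'a::field hq2) \<subseteq> {((0,1),(1,0)), ((0,0),(0,1))}"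
  by (auto simp: supp_def Delta_y_apply split: if_splits)

lemma tpow_formula:
  assumes q: "qok q"
  shows "tpow q Delta_y m ((a,i),(c,j)) = (if a = 0 \<and> c = int i \<and> i + j = m then qb q i j else 0)"
proof (induction m arbitrary: a i c j)
  case 0
  show ?case by (auto simp: tens_def bas_def q)
next
  case (Suc m)
  define T where "T = tpow q Delta_y m"
  have IH: "T ((a,i),(c,j)) = (if a = 0 \<and> c = int i \<and> i + j = m then qb q i j else 0)" for a i c j
    using Suc.IH by (simp add: T_def)
  define xi where "xi i = ((0::int, i), (int i, m - i))" for i
  define A where "A = xi ` {0..m}"
  have fA: "finite A" by (simp add: A_def)
  have sA: "supp T \<subseteq> A"
  proof
    fix x assume x: "x \<in> supp T"
    obtain a i c j where xe: "x = ((a,i),(c,j))" by (metis prod.collapse)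
    have "T ((a,i),(c,j)) \<noteq> 0" using x xe by (simp add: supp_def)
    hence "a = 0" "c = int i" "i + j = m" using IH[of a i c j] by (auto split: if_splits)
    thus "x \<in> A" unfolding A_def xi_def xe by (auto intro!: image_eqI[of _ _ i])
  qed
  define y1 where "y1 = (((0::int),(1::nat)),((1::int),(0::nat)))"
  define y2 where "y2 = (((0::int),(0::nat)),((0::int),(1::nat)))"
  have y12: "y1 \<noteq> y2" by (simp add: y1_def y2_def)
  have inj: "inj_on xi {0..m}" by (auto simp: inj_on_def xi_def)
  have Tx: "T (xi i) = qb q i (m - i)" if "i \<in> {0..m}" for i
    using that by (simp add: xi_def IH)
  define G where "G x y = (if tmono_idx x y = ((a, i), (c, j)) then T x * Delta_y y * tmono_coef q x y else 0)" for x y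
  have "tpow q Delta_y (Suc m) ((a,i),(c,j)) = (\<Sum>x\<in>A. \<Sum>y\<in>{y1,y2}. G x y)"
    unfolding G_def by (simp add: T_def[symmetric]) (rule tmul_superset[OF fA sA], simp, use supp_Delta_y y1_def y2_def in auto)
  also have "\<dots> = (\<Sum>k\<in>{0..m}. G (xi k) y1 + G (xi k) y2)"
    unfolding A_def using y12 by (simp add: sum.reindex[OF inj])
  also have "\<dots> = (\<Sum>k\<in>{0..m}. if ((0, Suc k), (int (Suc k), m - k)) = ((a,i),(c,j)) then qb q k (m - k) * q ^ (m - k) else 0)
      + (\<Sum>k\<in>{0..m}. if ((0, k), (int k, Suc (m - k))) = ((a,i),(c,j)) then qb q k (m - k) else 0)"
    unfolding sum.distrib
  proof (intro arg_cong2[where f="(+)"] sum.cong refl)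
    fix k assume k: "k \<in> {0..m}"
    show "G (xi k) y1 = (if ((0, Suc k), (int (Suc k), m - k)) = ((a,i),(c,j)) then qb q k (m - k) * q ^ (m - k) else 0)"
      unfolding G_def Tx[OF k] using k by (simp add: xi_def y1_def tmono_idx_def tmono_coef_def Delta_y_apply)
    show "G (xi k) y2 = (if ((0, k), (int k, Suc (m - k))) = ((a,i),(c,j)) then qb q k (m - k) else 0)"
      unfolding G_def Tx[OF k] using k by (auto simp add: xi_def y2_def tmono_idx_def tmono_coef_def Delta_y_apply)
  qed
  also have "(\<Sum>k\<in>{0..m}. if ((0, Suc k), (int (Suc k), m - k)) = ((a,i),(c,j)) then qb q k (m - k) * q ^ (m - k) else 0)
     = (if a = 0 \<and> c = int i \<and> i \<ge> 1 \<and> i + j = Suc m then qb q (i - 1) j * q ^ j else 0)"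
    by (subst sum_if_unique[where k="i - 1"]) auto
  also have "(\<Sum>k\<in>{0..m}. if ((0, k), (int k, Suc (m - k))) = ((a,i),(c,j)) then qb q k (m - k) else 0)
     = (if a = 0 \<and> c = int i \<and> j \<ge> 1 \<and> i + j = Suc m then qb q i (j - 1) else 0)"
    by (subst sum_if_unique[where k="i"]) auto
  finally have E: "tpow q Delta_y (Suc m) ((a,i),(c,j)) =
     (if a = 0 \<and> c = int i \<and> i \<ge> 1 \<and> i + j = Suc m then qb q (i - 1) j * q ^ j else 0) +
     (if a = 0 \<and> c = int i \<and> j \<ge> 1 \<and> i + j = Suc m then qb q i (j - 1) else 0)" .
  show ?case
  proof (cases "a = 0 \<and> c = int i \<and> i + j = Suc m")
    case False thus ?thesis using E by auto
  next
    case True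
    show ?thesis
    proof (cases i)
      case 0 thus ?thesis using E True q by simp
    next
      case (Suc i')
      show ?thesis
      proof (cases j)
        case 0 thus ?thesis using E True q Suc by simp
      next
        case (Suc j')
        thus ?thesis using E True \<open>i = Suc i'\<close> qb_rec[OF q, of i' j'] by simp
      qed
    qed
  qed
qed

lemma sum_single: "sum g {x} = g x" by simp

lemma Delta_bas_formula:
  assumes q: "qok q"
  shows "Delta_bas q (n,m) ((a,i),(c,j)) = (if a = n \<and> c = n + int i \<and> i + j = m then qb q i j else 0)"
proof -
  define xi where "xi i = ((0::int, i), (int i, m - i))" for i
  define A where "A = xi ` {0..m}"
  have fA: "finite A" by (simp add: A_def)
  have sA: "supp (tpow q Delta_y m) \<subseteq> A"
  proof
    fix x assume x: "x \<in> supp (tpow q Delta_y m)"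
    obtain a i c j where xe: "x = ((a,i),(c,j))" by (metis prod.collapse)
    have "tpow q Delta_y m ((a,i),(c,j)) \<noteq> 0" using x xe by (simp add: supp_def)
    hence "a = 0" "c = int i" "i + j = m" using tpow_formula[OF q, of m a i c j] by (auto split: if_splits)
    thus "x \<in> A" unfolding A_def xi_def xe by (auto intro!: image_eqI[of _ _ i])
  qed
  define x0 where "x0 = ((n, 0::nat), (n, 0::nat))"
  have s0: "supp (tens (bas (n, 0)) (bas (n, 0)) :: 'a hq2) \<subseteq> {x0}"
    by (auto simp: supp_def tens_def bas_def x0_def case_prod_beta prod_eq_iff split: if_splits)
  have inj: "inj_on xi {0..m}" by (auto simp: inj_on_def xi_def)
  have "Delta_bas q (n,m) ((a,i),(c,j)) = (\<Sum>x\<in>{x0}. \<Sum>y\<in>A. if tmono_idx x y = ((a,i),(c,j)) then tens (bas (n, 0)) (bas (n, 0)) x * tpow q Delta_y m y * tmono_coef q x y else 0)"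
    unfolding Delta_bas_def by (simp only: prod.case) (rule tmul_superset[OF _ s0 fA sA], simp)
  also have "\<dots> = (\<Sum>k\<in>{0..m}. if ((n, k), (n + int k, m - k)) = ((a,i),(c,j)) then qb q k (m - k) else 0)"
    unfolding A_def sum.reindex[OF inj] comp_def
    by (simp only: sum_single, rule sum.cong) (auto simp: x0_def xi_def tens_def bas_def tmono_idx_def tmono_coef_def tpow_formula[OF q])
  also have "\<dots> = (if a = n \<and> c = n + int i \<and> i + j = m then qb q i j else 0)"
    by (subst sum_if_unique[where k=i]) auto
  finally show ?thesis .
qed

lemma Delta_bas_nz:
  assumes q: "qok q" and "Delta_bas q (n,m) p \<noteq> 0"
  shows "fst (fst p) = n \<and> fst (snd p) = n + int (snd (fst p)) \<and> snd (fst p) + snd (snd p) = m"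
proof -
  obtain a i c j where "p = ((a,i),(c,j))" by (metis prod.collapse)
  thus ?thesis using assms Delta_bas_formula[OF q, of n m a i c j] by (auto split: if_splits)
qed

lemma Delta_bas_T2:
  assumes q: "qok q"
  shows "Delta_bas q b \<in> T2"
proof -
  obtain n m where b: "b = (n,m)" by (metis prod.collapse)
  have "supp (Delta_bas q (n,m)) \<subseteq> (\<lambda>i. ((n, i), (n + int i, m - i))) ` {0..m}"
  proof
    fix p assume "p \<in> supp (Delta_bas q (n,m))"
    hence "Delta_bas q (n,m) p \<noteq> 0" by (simp add: supp_def)
    from Delta_bas_nz[OF q this] show "p \<in> (\<lambda>i. ((n, i), (n + int i, m - i))) ` {0..m}"
      by (intro image_eqI[of _ _ "snd (fst p)"]) (auto simp: prod_eq_iff)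
  qed
  thus ?thesis unfolding b T2_def by (auto intro: finite_subset)
qed

lemma Delta_superset:
  assumes "finite S" "supp h \<subseteq> S"
  shows "Delta q h p = (\<Sum>b\<in>S. h b * Delta_bas q b p)"
  unfolding Delta_def by (rule sum.mono_neutral_left) (use assms in \<open>auto simp: supp_def\<close>)

lemma Delta_T2:
  assumes q: "qok q" and h: "h \<in> Hc"
  shows "Delta q h \<in> T2"
proof -
  have fh: "finite (supp h)" using h by (simp add: Hc_def)
  have "supp (Delta q h) \<subseteq> (\<Union>b\<in>supp h. supp (Delta_bas q b))"
  proof
    fix p assume "p \<in> supp (Delta q h)"
    hence "(\<Sum>b\<in>supp h. h b * Delta_bas q b p) \<noteq> 0" by (simp add: supp_def Delta_def)
    then obtain b where "b \<in> supp h" "h b * Delta_bas q b p \<noteq> 0"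
      by (meson sum.not_neutral_contains_not_neutral)
    hence "b \<in> supp h" "p \<in> supp (Delta_bas q b)" by (auto simp: supp_def)
    thus "p \<in> (\<Union>b\<in>supp h. supp (Delta_bas q b))" by blast
  qed
  moreover have "finite (\<Union>b\<in>supp h. supp (Delta_bas q b))"
    using fh Delta_bas_T2[OF q] by (auto simp: T2_def)
  ultimately show ?thesis by (simp add: T2_def finite_subset)
qed



lemma Aut_good: "\<phi> \<in> Aut_c q \<Longrightarrow> good \<phi>"
  unfolding Aut_c_def good_def by (auto simp: bij_betw_def)

lemma Aut_Hc: "\<phi> \<in> Aut_c q \<Longrightarrow> h \<in> Hc \<Longrightarrow> \<phi> h \<in> Hc"
  unfolding Aut_c_def by (auto simp: bij_betw_def)

lemma Aut_lin: "\<phi> \<in> Aut_c q \<Longrightarrow> linear_H \<phi>"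
  unfolding Aut_c_def by auto

lemma Aut_Delta: "\<phi> \<in> Aut_c q \<Longrightarrow> h \<in> Hc \<Longrightarrow> Delta q (\<phi> h) = tmap \<phi> \<phi> (Delta q h)"
  unfolding Aut_c_def by auto

lemma Aut_eps: "\<phi> \<in> Aut_c q \<Longrightarrow> h \<in> Hc \<Longrightarrow> eps (\<phi> h) = eps h"
  unfolding Aut_c_def by auto

lemma tmap_compose: "tmap (compose Hc \<phi> \<psi>) (compose Hc \<phi> \<psi>) = tmap (\<lambda>h. \<phi> (\<psi> h)) (\<lambda>h. \<phi> (\<psi> h))"
  by (rule tmap_cong) (simp_all add: compose_eq)

lemma Aut_compose:
  assumes q: "qok q" and p: "\<phi> \<in> Aut_c q" and s: "\<psi> \<in> Aut_c q"
  shows "compose Hc \<phi> \<psi> \<in> Aut_c q"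
proof -
  have ext: "compose Hc \<phi> \<psi> \<in> extensional Hc" by (rule compose_extensional)
  have bij: "bij_betw (compose Hc \<phi> \<psi>) Hc Hc"
  proof -
    have "bij_betw (\<phi> \<circ> \<psi>) Hc Hc" using p s unfolding Aut_c_def by (auto intro: bij_betw_trans)
    thus ?thesis by (rule bij_betw_cong[THEN iffD1, rotated]) (simp add: compose_eq)
  qed
  have lin: "linear_H (compose Hc \<phi> \<psi>)"
    unfolding linear_H_def
  proof (intro conjI ballI allI)
    fix u v :: "'a hq" assume u: "u \<in> Hc" and v: "v \<in> Hc"
    show "compose Hc \<phi> \<psi> (hadd u v) = hadd (compose Hc \<phi> \<psi> u) (compose Hc \<phi> \<psi> v)"
      using u v hadd_Hc[OF u v] lin_add[OF Aut_lin[OF p] Aut_Hc[OF s u] Aut_Hc[OF s v]] lin_add[OF Aut_lin[OF s] u v]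
      by (simp add: compose_eq)
  next
    fix c :: 'a and u :: "'a hq" assume u: "u \<in> Hc"
    show "compose Hc \<phi> \<psi> (hscale c u) = hscale c (compose Hc \<phi> \<psi> u)"
      using u hscale_Hc[OF u] lin_scale[OF Aut_lin[OF p] Aut_Hc[OF s u]] lin_scale[OF Aut_lin[OF s] u]
      by (simp add: compose_eq)
  qed
  have del: "Delta q (compose Hc \<phi> \<psi> h) = tmap (compose Hc \<phi> \<psi>) (compose Hc \<phi> \<psi>) (Delta q h)" if h: "h \<in> Hc" for h
  proof -
    have "Delta q (compose Hc \<phi> \<psi> h) = tmap \<phi> \<phi> (tmap \<psi> \<psi> (Delta q h))"
      using h by (simp add: compose_eq Aut_Delta[OF p Aut_Hc[OF s h]] Aut_Delta[OF s h])
    also have "\<dots> = tmap (\<lambda>h. \<phi> (\<psi> h)) (\<lambda>h. \<phi> (\<psi> h)) (Delta q h)"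
      by (rule tmap_comp[OF Aut_good[OF p] Aut_good[OF s] Delta_T2[OF q h]])
    finally show ?thesis by (simp add: tmap_compose)
  qed
  have ep: "eps (compose Hc \<phi> \<psi> h) = eps h" if h: "h \<in> Hc" for h
    using h by (simp add: compose_eq Aut_eps[OF p Aut_Hc[OF s h]] Aut_eps[OF s h])
  show ?thesis unfolding Aut_c_def using ext bij lin del ep by blast
qed

lemma Aut_id:
  assumes q: "qok q"
  shows "(\<lambda>h\<in>Hc. h) \<in> Aut_c q"
proof -
  have lin: "linear_H (\<lambda>h\<in>Hc. h)" unfolding linear_H_def by (auto simp: hadd_Hc hscale_Hc)
  have bij: "bij_betw (\<lambda>h\<in>Hc. h) Hc Hc" by (rule bij_betw_cong[THEN iffD1, OF _ bij_betw_id]) simp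
  have "Delta q h = tmap (\<lambda>h\<in>Hc. h) (\<lambda>h\<in>Hc. h) (Delta q h)" if "h \<in> Hc" for h
    using tmap_id[OF Delta_T2[OF q that]] by simp
  thus ?thesis unfolding Aut_c_def using lin bij by auto
qed

lemma Aut_inv:
  assumes q: "qok q" and p: "\<phi> \<in> Aut_c q"
  shows "(\<lambda>h\<in>Hc. inv_into Hc \<phi> h) \<in> Aut_c q"
    and "compose Hc (\<lambda>h\<in>Hc. inv_into Hc \<phi> h) \<phi> = (\<lambda>h\<in>Hc. h)"
proof -
  define \<psi> where "\<psi> = (\<lambda>h\<in>Hc. inv_into Hc \<phi> h)"
  have bp: "bij_betw \<phi> Hc Hc" using p by (simp add: Aut_c_def)
  have bs: "bij_betw \<psi> Hc Hc"
    unfolding \<psi>_def by (rule bij_betw_cong[THEN iffD1, OF _ bij_betw_inv_into[OF bp]]) simp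
  have sHc: "\<psi> h \<in> Hc" if "h \<in> Hc" for h using bs that by (auto simp: bij_betw_def)
  have ps: "\<phi> (\<psi> h) = h" if "h \<in> Hc" for h
    using that bp unfolding \<psi>_def by (simp add: bij_betw_inv_into_right)
  have sp: "\<psi> (\<phi> h) = h" if "h \<in> Hc" for h
    using that bp unfolding \<psi>_def by (auto simp: bij_betw_inv_into_left bij_betw_def)
  have lp: "linear_H \<phi>" by (rule Aut_lin[OF p])
  have lin: "linear_H \<psi>"
    unfolding linear_H_def
  proof (intro conjI ballI allI)
    fix u v :: "'a hq" assume u: "u \<in> Hc" and v: "v \<in> Hc"
    have "\<phi> (hadd (\<psi> u) (\<psi> v)) = hadd u v"
      using lin_add[OF lp sHc[OF u] sHc[OF v]] ps u v by simp
    hence "\<psi> (hadd u v) = \<psi> (\<phi> (hadd (\<psi> u) (\<psi> v)))" by simp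
    also have "\<dots> = hadd (\<psi> u) (\<psi> v)" by (rule sp[OF hadd_Hc[OF sHc[OF u] sHc[OF v]]])
    finally show "\<psi> (hadd u v) = hadd (\<psi> u) (\<psi> v)" .
  next
    fix s :: 'a and u :: "'a hq" assume u: "u \<in> Hc"
    have "\<phi> (hscale s (\<psi> u)) = hscale s u"
      using lin_scale[OF lp sHc[OF u]] ps u by simp
    hence "\<psi> (hscale s u) = \<psi> (\<phi> (hscale s (\<psi> u)))" by simp
    also have "\<dots> = hscale s (\<psi> u)" by (rule sp[OF hscale_Hc[OF sHc[OF u]]])
    finally show "\<psi> (hscale s u) = hscale s (\<psi> u)" .
  qed
  have gs: "good \<psi>" using lin sHc by (simp add: good_def)
  have del: "Delta q (\<psi> h) = tmap \<psi> \<psi> (Delta q h)" if h: "h \<in> Hc" for h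
  proof -
    have g: "\<psi> h \<in> Hc" by (rule sHc[OF h])
    have "Delta q (\<psi> h) = tmap (\<lambda>h\<in>Hc. h) (\<lambda>h\<in>Hc. h) (Delta q (\<psi> h))"
      using tmap_id[OF Delta_T2[OF q g]] by simp
    also have "tmap (\<lambda>h\<in>Hc. h) (\<lambda>h\<in>Hc. h) = tmap (\<lambda>h. \<psi> (\<phi> h)) (\<lambda>h. \<psi> (\<phi> h))"
      by (rule tmap_cong) (simp_all add: sp)
    also have "tmap (\<lambda>h. \<psi> (\<phi> h)) (\<lambda>h. \<psi> (\<phi> h)) (Delta q (\<psi> h)) = tmap \<psi> \<psi> (tmap \<phi> \<phi> (Delta q (\<psi> h)))"
      by (rule tmap_comp[OF gs Aut_good[OF p] Delta_T2[OF q g], symmetric])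
    also have "tmap \<phi> \<phi> (Delta q (\<psi> h)) = Delta q h"
      using Aut_Delta[OF p g] ps[OF h] by simp
    finally show ?thesis .
  qed
  have ep: "eps (\<psi> h) = eps h" if h: "h \<in> Hc" for h
    using Aut_eps[OF p sHc[OF h]] ps[OF h] by simp
  have ext: "\<psi> \<in> extensional Hc" by (simp add: \<psi>_def)
  have "\<psi> \<in> Aut_c q" unfolding Aut_c_def using ext bs lin del ep by blast
  thus "(\<lambda>h\<in>Hc. inv_into Hc \<phi> h) \<in> Aut_c q" by (simp add: \<psi>_def)
  show "compose Hc (\<lambda>h\<in>Hc. inv_into Hc \<phi> h) \<phi> = (\<lambda>h\<in>Hc. h)"
    using sp by (auto simp: compose_def \<psi>_def[symmetric])
qed

lemma Autc_group:
  assumes q: "qok q"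
  shows "group (AutcGroup q)"
proof (rule groupI)
  fix x y assume "x \<in> carrier (AutcGroup q)" "y \<in> carrier (AutcGroup q)"
  thus "x \<otimes>\<^bsub>AutcGroup q\<^esub> y \<in> carrier (AutcGroup q)"
    by (simp add: AutcGroup_def Aut_compose[OF q])
next
  show "\<one>\<^bsub>AutcGroup q\<^esub> \<in> carrier (AutcGroup q)" by (simp add: AutcGroup_def Aut_id[OF q])
next
  fix x y z assume "x \<in> carrier (AutcGroup q)" "y \<in> carrier (AutcGroup q)" "z \<in> carrier (AutcGroup q)"
  hence "z \<in> Hc \<rightarrow> Hc" by (auto simp: AutcGroup_def Aut_Hc)
  thus "x \<otimes>\<^bsub>AutcGroup q\<^esub> y \<otimes>\<^bsub>AutcGroup q\<^esub> z = x \<otimes>\<^bsub>AutcGroup q\<^esub> (y \<otimes>\<^bsub>AutcGroup q\<^esub> z)"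
    by (simp add: AutcGroup_def compose_assoc)
next
  fix x assume x: "x \<in> carrier (AutcGroup q)"
  hence e: "x \<in> extensional Hc" and h: "\<And>h. h \<in> Hc \<Longrightarrow> x h \<in> Hc"
    by (auto simp: AutcGroup_def Aut_c_def Aut_Hc)
  show "\<one>\<^bsub>AutcGroup q\<^esub> \<otimes>\<^bsub>AutcGroup q\<^esub> x = x"
    using e h by (auto simp: AutcGroup_def compose_def extensional_def fun_eq_iff)
next
  fix x assume x: "x \<in> carrier (AutcGroup q)"
  hence "x \<in> Aut_c q" by (simp add: AutcGroup_def)
  thus "\<exists>y\<in>carrier (AutcGroup q). y \<otimes>\<^bsub>AutcGroup q\<^esub> x = \<one>\<^bsub>AutcGroup q\<^esub>"
    using Aut_inv[OF q] by (auto simp: AutcGroup_def)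
qed



definition Dn :: "int \<Rightarrow> 'a::field hq" where
  "Dn n = hsub (bas (n + 1, 0)) (bas (n, 0))"

lemma Dn_Hc[simp]: "Dn n \<in> Hc" by (simp add: Dn_def hsub_Hc)

lemma hyform_inj:
  assumes "hadd (bas (n, 1)) (hscale \<beta> (Dn n)) = hadd (bas (n, 1)) (hscale \<beta>' (Dn n))"
  shows "\<beta> = (\<beta>' :: 'a::field)"
proof -
  have "hadd (bas (n, 1)) (hscale \<beta> (Dn n)) (n + 1, 0) = hadd (bas (n, 1)) (hscale \<beta>' (Dn n)) (n + 1, 0)"
    using assms by simp
  thus ?thesis by (simp add: hadd_def hscale_def Dn_def hsub_def bas_def)
qed

lemma f1_eq:
  assumes "\<phi> (bas (n, 1)) = hadd (bas (n, 1)) (hscale \<beta> (Dn n))"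
  shows "f1 \<phi> n = \<beta>"
  unfolding f1_def
  by (rule the_equality) (use assms hyform_inj in \<open>auto simp: Dn_def\<close>)

lemma star_props:
  assumes "\<phi> \<in> Aut_star q"
  shows "\<phi> \<in> Aut_c q" "\<phi> (bas (n, 0)) = bas (n, 0)"
    "\<phi> (bas (n, 1)) = hadd (bas (n, 1)) (hscale (f1 \<phi> n) (Dn n))"
proof -
  show "\<phi> \<in> Aut_c q" "\<phi> (bas (n, 0)) = bas (n, 0)" using assms by (auto simp: Aut_star_def)
  obtain \<beta> where b: "\<phi> (bas (n, 1)) = hadd (bas (n, 1)) (hscale \<beta> (Dn n))"
    using assms by (auto simp: Aut_star_def Dn_def)
  thus "\<phi> (bas (n, 1)) = hadd (bas (n, 1)) (hscale (f1 \<phi> n) (Dn n))" using f1_eq[of \<phi> n \<beta>, OF b] by simp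
qed

lemma star_Dn:
  assumes "\<phi> \<in> Aut_star q" shows "\<phi> (Dn n) = Dn n"
  using lin_sub[OF Aut_lin[OF star_props(1)[OF assms]] bas_Hc bas_Hc] star_props(2)[OF assms]
  by (simp add: Dn_def)

lemma star_compose:
  assumes "\<phi> \<in> Aut_star q" "\<psi> \<in> Aut_star q"
  shows "compose Hc \<phi> \<psi> (bas (n, 1)) = hadd (bas (n, 1)) (hscale (f1 \<phi> n + f1 \<psi> n) (Dn n))"
proof -
  have l: "linear_H \<phi>" by (rule Aut_lin[OF star_props(1)[OF assms(1)]])
  have "compose Hc \<phi> \<psi> (bas (n, 1)) = \<phi> (\<psi> (bas (n, 1)))" by (simp only: compose_eq bas_Hc)
  also have "\<dots> = \<phi> (hadd (bas (n, 1)) (hscale (f1 \<psi> n) (Dn n)))"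
    by (simp only: star_props(3)[OF assms(2)])
  also have "\<dots> = hadd (\<phi> (bas (n, 1))) (hscale (f1 \<psi> n) (\<phi> (Dn n)))"
    using lin_add[OF l bas_Hc hscale_Hc[OF Dn_Hc]] lin_scale[OF l Dn_Hc] by simp
  also have "\<dots> = hadd (bas (n, 1)) (hscale (f1 \<phi> n + f1 \<psi> n) (Dn n))"
    unfolding star_props(3)[OF assms(1)] star_Dn[OF assms(1)]
    by (simp add: hadd_def hscale_def algebra_simps)
  finally show ?thesis .
qed

lemma star_sub:
  assumes q: "qok q"
  shows "subgroup (Aut_star q) (AutcGroup q)"
proof (rule group.subgroupI[OF Autc_group[OF q]])
  show "Aut_star q \<subseteq> carrier (AutcGroup q)" by (auto simp: Aut_star_def AutcGroup_def)
  show "Aut_star q \<noteq> {}"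
  proof -
    have "(\<lambda>h\<in>Hc. h) \<in> Aut_star q"
      using Aut_id[OF q] unfolding Aut_star_def
      by (auto intro!: exI[of _ 0] simp: hadd_def hscale_def)
    thus ?thesis by blast
  qed
next
  fix a b assume a: "a \<in> Aut_star q" and b: "b \<in> Aut_star q"
  have c: "compose Hc a b \<in> Aut_c q" by (rule Aut_compose[OF q star_props(1)[OF a] star_props(1)[OF b]])
  have "compose Hc a b (bas (n, 0)) = bas (n, 0)" for n
    by (simp add: compose_eq star_props(2)[OF a] star_props(2)[OF b])
  thus "a \<otimes>\<^bsub>AutcGroup q\<^esub> b \<in> Aut_star q"
    using c star_compose[OF a b] unfolding Aut_star_def AutcGroup_def Dn_def by auto
next
  fix a assume a: "a \<in> Aut_star q"
  interpret G: group "AutcGroup q" by (rule Autc_group[OF q])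
  have ac: "a \<in> carrier (AutcGroup q)" using a by (simp add: Aut_star_def AutcGroup_def)
  define y where "y = inv\<^bsub>AutcGroup q\<^esub> a"
  have yc: "y \<in> Aut_c q" using G.inv_closed[OF ac] by (simp add: y_def AutcGroup_def)
  have "y \<otimes>\<^bsub>AutcGroup q\<^esub> a = \<one>\<^bsub>AutcGroup q\<^esub>" using G.l_inv[OF ac] by (simp add: y_def)
  hence ya: "compose Hc y a = (\<lambda>h\<in>Hc. h)" by (simp add: AutcGroup_def)
  have yah: "y (a h) = h" if "h \<in> Hc" for h
    using fun_cong[OF ya, of h] that by (simp add: compose_eq)
  have ly: "linear_H y" by (rule Aut_lin[OF yc])
  have la: "linear_H a" by (rule Aut_lin[OF star_props(1)[OF a]])
  have y0: "y (bas (n, 0)) = bas (n, 0)" for n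
    using yah[of "bas (n,0)"] star_props(2)[OF a] by simp
  have y1: "y (bas (n, 1)) = hadd (bas (n, 1)) (hscale (- f1 a n) (Dn n))" for n
  proof -
    define w where "w = hadd (bas (n, 1)) (hscale (- f1 a n) (Dn n))"
    have wH: "w \<in> Hc" by (simp add: w_def hadd_Hc hscale_Hc)
    have "a w = hadd (a (bas (n, 1))) (hscale (- f1 a n) (a (Dn n)))"
      unfolding w_def using lin_add[OF la bas_Hc hscale_Hc[OF Dn_Hc]] lin_scale[OF la Dn_Hc] by simp
    also have "\<dots> = bas (n, 1)"
      unfolding star_props(3)[OF a] star_Dn[OF a] by (simp add: hadd_def hscale_def algebra_simps)
    finally have "a w = bas (n, 1)" .
    thus ?thesis using yah[OF wH] by (simp add: w_def)
  qed
  show "inv\<^bsub>AutcGroup q\<^esub> a \<in> Aut_star q"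
    unfolding y_def[symmetric] Aut_star_def using yc y0 y1 by (auto simp: Dn_def)
qed

lemma f1_hom:
  assumes q: "qok q"
  shows "f1 \<in> hom ((AutcGroup q)\<lparr>carrier := Aut_star q\<rparr>) SeqGroup"
  unfolding hom_def
proof (intro CollectI conjI ballI)
  show "f1 \<in> carrier ((AutcGroup q)\<lparr>carrier := Aut_star q\<rparr>) \<rightarrow> carrier SeqGroup"
    by (simp add: SeqGroup_def)
next
  fix x y assume "x \<in> carrier ((AutcGroup q)\<lparr>carrier := Aut_star q\<rparr>)" "y \<in> carrier ((AutcGroup q)\<lparr>carrier := Aut_star q\<rparr>)"
  hence x: "x \<in> Aut_star q" and y: "y \<in> Aut_star q" by auto
  show "f1 (x \<otimes>\<^bsub>(AutcGroup q)\<lparr>carrier := Aut_star q\<rparr>\<^esub> y) = f1 x \<otimes>\<^bsub>SeqGroup\<^esub> f1 y"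
    by (auto simp: AutcGroup_def SeqGroup_def fun_eq_iff intro!: f1_eq star_compose[OF x y])
qed

lemma kernel_eq:
  assumes q: "qok q"
  shows "kernel ((AutcGroup q)\<lparr>carrier := Aut_star q\<rparr>) SeqGroup f1 = Aut_1 q"
proof
  show "kernel ((AutcGroup q)\<lparr>carrier := Aut_star q\<rparr>) SeqGroup f1 \<subseteq> Aut_1 q"
  proof
    fix x assume "x \<in> kernel ((AutcGroup q)\<lparr>carrier := Aut_star q\<rparr>) SeqGroup f1"
    hence x: "x \<in> Aut_star q" and f: "f1 x = (\<lambda>n. 0)" by (auto simp: kernel_def SeqGroup_def)
    have xb: "x (bas b) = bas b" if "snd b < 2" for b
    proof -
      obtain n m where b: "b = (n, m)" by (metis prod.collapse)
      have "m = 0 \<or> m = 1" using that b by auto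
      thus ?thesis using star_props(2)[OF x, of n] star_props(3)[OF x, of n] f b
        by (auto simp: hadd_def hscale_def)
    qed
    have "x h = h" if h: "h \<in> H01" for h
    proof
      fix p
      have hH: "h \<in> Hc" and h2: "\<And>n m. 2 \<le> m \<Longrightarrow> h (n, m) = 0" using h by (auto simp: H01_def)
      have fh: "finite (supp h)" using hH by (simp add: Hc_def)
      have "x h p = (\<Sum>b\<in>supp h. h b * x (bas b) p)"
        by (rule lin_expand[OF Aut_lin[OF star_props(1)[OF x]] fh order_refl])
      also have "\<dots> = (\<Sum>b\<in>supp h. if b = p then h b else 0)"
      proof (rule sum.cong[OF refl])
        fix b assume "b \<in> supp h"
        hence "snd b < 2" using h2 by (metis not_less prod.collapse supp_iff)
        thus "h b * x (bas b) p = (if b = p then h b else 0)" using xb by (simp add: bas_def)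
      qed
      also have "\<dots> = h p" using fh by (simp add: sum.delta') (auto simp: supp_def)
      finally show "x h p = h p" .
    qed
    thus "x \<in> Aut_1 q" using star_props(1)[OF x] by (simp add: Aut_1_def)
  qed
next
  show "Aut_1 q \<subseteq> kernel ((AutcGroup q)\<lparr>carrier := Aut_star q\<rparr>) SeqGroup f1"
  proof
    fix x assume x: "x \<in> Aut_1 q"
    have b01: "bas (n, 0) \<in> H01" "bas (n, 1) \<in> H01" for n :: int
      using bas_Hc by (auto simp: H01_def bas_def)
    have x0: "x (bas (n, 0)) = bas (n, 0)" and x1: "x (bas (n, 1)) = bas (n, 1)" for n
      using x b01 by (auto simp: Aut_1_def)
    have x1': "x (bas (n, 1)) = hadd (bas (n, 1)) (hscale 0 (Dn n))" for n
      using x1 by (simp add: hadd_def hscale_def)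
    have "x \<in> Aut_star q" using x x0 x1' by (auto simp: Aut_1_def Aut_star_def Dn_def)
    moreover have "f1 x = (\<lambda>n. 0)" using f1_eq[of x _ 0, OF x1'] by auto
    ultimately show "x \<in> kernel ((AutcGroup q)\<lparr>carrier := Aut_star q\<rparr>) SeqGroup f1"
      by (simp add: kernel_def SeqGroup_def)
  qed
qed



section \<open>Construction of automorphisms\<close>

definition tri :: "(int \<Rightarrow> int \<Rightarrow> 'a::field) \<Rightarrow> bool" where
  "tri X \<longleftrightarrow> (\<forall>s e. e < s \<longrightarrow> X s e = 0)"

definition cinv :: "(int \<Rightarrow> int \<Rightarrow> 'a::field) \<Rightarrow> (int \<Rightarrow> int \<Rightarrow> 'a) \<Rightarrow> bool" where
  "cinv X Y \<longleftrightarrow> (\<forall>s e. s \<le> e \<longrightarrow> (\<Sum>t\<in>{s..e}. X s t * Y t e) = (if s = e then 1 else 0))"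

definition K :: "'a::field \<Rightarrow> (int \<Rightarrow> int \<Rightarrow> 'a) \<Rightarrow> (int \<Rightarrow> int \<Rightarrow> 'a) \<Rightarrow> idx \<Rightarrow> idx \<Rightarrow> 'a" where
  "K q X Y b p = qf q (snd b) / qf q (snd p) * X (fst b) (fst p) * Y (fst p + int (snd p)) (fst b + int (snd b))"

definition Phi :: "'a::field \<Rightarrow> (int \<Rightarrow> int \<Rightarrow> 'a) \<Rightarrow> (int \<Rightarrow> int \<Rightarrow> 'a) \<Rightarrow> 'a hq \<Rightarrow> 'a hq" where
  "Phi q X Y = (\<lambda>h\<in>Hc. \<lambda>p. \<Sum>b\<in>supp h. h b * K q X Y b p)"

lemma tri_zero: "tri X \<Longrightarrow> e < s \<Longrightarrow> X s e = 0" by (simp add: tri_def)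

lemma conv_range:
  assumes tX: "tri X" and tY: "tri Y" and c: "cinv X Y" and lo: "lo \<le> s" and hi: "e \<le> hi"
  shows "(\<Sum>t\<in>{lo..hi}. X s t * Y t e) = (if s = e then 1 else 0)"
proof (cases "s \<le> e")
  case True
  have "(\<Sum>t\<in>{lo..hi}. X s t * Y t e) = (\<Sum>t\<in>{s..e}. X s t * Y t e)"
    by (rule sum.mono_neutral_right) (use lo hi tri_zero[OF tX] tri_zero[OF tY] in auto)
  thus ?thesis using c True by (simp add: cinv_def)
next
  case False
  have z: "X s t * Y t e = 0" for t
    by (cases "t < s") (use False tri_zero[OF tX] tri_zero[OF tY] in auto)
  have "(\<Sum>t\<in>{lo..hi}. X s t * Y t e) = (\<Sum>t\<in>{lo..hi}. 0)" by (rule sum.cong[OF refl]) (rule z)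
  thus ?thesis using False by simp
qed

lemma sum_shift: "(\<Sum>j\<in>{0..m::nat}. f (c + int j)) = (\<Sum>t\<in>{c..c + int m}. f t)"
  by (rule sum.reindex_bij_witness[where i="\<lambda>t. nat (t - c)" and j="\<lambda>j. c + int j"]) auto

lemma supp_K:
  assumes tX: "tri X" and tY: "tri Y"
  shows "supp (K q X Y (n, m)) \<subseteq> {n..n + int m} \<times> {0..m}"
proof
  fix p assume "p \<in> supp (K q X Y (n, m))"
  hence "X n (fst p) \<noteq> 0" "Y (fst p + int (snd p)) (n + int m) \<noteq> 0" by (auto simp: supp_def K_def)
  hence "n \<le> fst p" "fst p + int (snd p) \<le> n + int m" using tri_zero[OF tX] tri_zero[OF tY] by (auto simp: not_less[symmetric])
  thus "p \<in> {n..n + int m} \<times> {0..m}" by (cases p) auto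
qed

lemma K_Hc: "tri X \<Longrightarrow> tri Y \<Longrightarrow> K q X Y b \<in> Hc"
  using supp_K[of X Y q "fst b" "snd b"] by (auto simp: Hc_def intro: finite_subset)

lemma Phi_superset:
  assumes "h \<in> Hc" "finite S" "supp h \<subseteq> S"
  shows "Phi q X Y h p = (\<Sum>b\<in>S. h b * K q X Y b p)"
proof -
  have "Phi q X Y h p = (\<Sum>b\<in>supp h. h b * K q X Y b p)" using assms(1) by (simp add: Phi_def)
  also have "\<dots> = (\<Sum>b\<in>S. h b * K q X Y b p)"
    by (rule sum.mono_neutral_left) (use assms in \<open>auto simp: supp_def\<close>)
  finally show ?thesis .
qed

lemma lincomb_supp:
  fixes f :: "'c \<Rightarrow> 'a::field hq" and c :: "'c \<Rightarrow> 'a"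
  assumes "finite B" "\<And>b. b \<in> B \<Longrightarrow> f b \<in> Hc"
  shows "supp (\<lambda>p. \<Sum>b\<in>B. c b * f b p) \<subseteq> (\<Union>b\<in>B. supp (f b))"
    and "finite (\<Union>b\<in>B. supp (f b))"
proof -
  show "finite (\<Union>b\<in>B. supp (f b))" using assms by (auto simp: Hc_def)
  show "supp (\<lambda>p. \<Sum>b\<in>B. c b * f b p) \<subseteq> (\<Union>b\<in>B. supp (f b))"
  proof
    fix p assume "p \<in> supp (\<lambda>p. \<Sum>b\<in>B. c b * f b p)"
    hence "(\<Sum>b\<in>B. c b * f b p) \<noteq> 0" by (simp add: supp_def)
    then obtain b where "b \<in> B" "c b * f b p \<noteq> 0" by (meson sum.not_neutral_contains_not_neutral)
    thus "p \<in> (\<Union>b\<in>B. supp (f b))" by (auto simp: supp_def)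
  qed
qed

lemma lincomb_Hc:
  fixes f :: "'c \<Rightarrow> 'a::field hq" and c :: "'c \<Rightarrow> 'a"
  assumes "finite B" "\<And>b. b \<in> B \<Longrightarrow> f b \<in> Hc"
  shows "(\<lambda>p. \<Sum>b\<in>B. c b * f b p) \<in> Hc"
proof -
  note l = lincomb_supp(1)[OF assms, where c=c] lincomb_supp(2)[OF assms]
  show ?thesis unfolding Hc_def using finite_subset[OF l] by simp
qed

lemma Phi_Hc:
  assumes "tri X" "tri Y" "h \<in> Hc" shows "Phi q X Y h \<in> Hc"
  using assms lincomb_Hc[of "supp h" "K q X Y" h] K_Hc[OF assms(1,2)]
  by (simp add: Phi_def Hc_def)

lemma Phi_bas: "Phi q X Y (bas b) = K q X Y b"
proof -
  have "Phi q X Y (bas b) = (\<lambda>p. \<Sum>b'\<in>{b}. bas b b' * K q X Y b' p)"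
    unfolding Phi_def restrict_apply'[OF bas_Hc] supp_bas ..
  thus ?thesis by (simp add: bas_def)
qed

lemma Phi_linear:
  assumes "tri X" "tri Y"
  shows "linear_H (Phi q X Y)"
  unfolding linear_H_def
proof (intro conjI ballI allI)
  fix u v :: "'a hq" assume u: "u \<in> Hc" and v: "v \<in> Hc"
  define S where "S = supp u \<union> supp v"
  have fS: "finite S" using u v by (simp add: S_def Hc_def)
  have s1: "supp (hadd u v) \<subseteq> S" by (auto simp: S_def supp_def hadd_def)
  show "Phi q X Y (hadd u v) = hadd (Phi q X Y u) (Phi q X Y v)"
  proof
    fix p
    show "Phi q X Y (hadd u v) p = hadd (Phi q X Y u) (Phi q X Y v) p"
      unfolding hadd_def[of "Phi q X Y u"]
      using Phi_superset[OF hadd_Hc[OF u v] fS s1] Phi_superset[OF u fS, of q X Y p] Phi_superset[OF v fS, of q X Y p]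
      by (simp add: S_def hadd_def sum.distrib distrib_right)
  qed
next
  fix s :: 'a and u :: "'a hq" assume u: "u \<in> Hc"
  have fS: "finite (supp u)" using u by (simp add: Hc_def)
  have s1: "supp (hscale s u) \<subseteq> supp u" by (auto simp: supp_def hscale_def)
  show "Phi q X Y (hscale s u) = hscale s (Phi q X Y u)"
  proof
    fix p
    show "Phi q X Y (hscale s u) p = hscale s (Phi q X Y u) p"
      using Phi_superset[OF hscale_Hc[OF u] fS s1] Phi_superset[OF u fS order_refl, of q X Y p]
      by (simp add: hscale_def sum_distrib_left mult.assoc)
  qed
qed

lemma lincomb_linear:
  assumes l: "linear_H F" and fB: "finite B" and f: "\<And>b. b \<in> B \<Longrightarrow> f b \<in> Hc"
  shows "F (\<lambda>p. \<Sum>b\<in>B. c b * f b p) p = (\<Sum>b\<in>B. c b * F (f b) p)"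
proof -
  define S where "S = (\<Union>b\<in>B. supp (f b))"
  have fS: "finite S" and sg: "supp (\<lambda>p. \<Sum>b\<in>B. c b * f b p) \<subseteq> S"
    using lincomb_supp[OF fB f] by (auto simp: S_def)
  have "F (\<lambda>p. \<Sum>b\<in>B. c b * f b p) p = (\<Sum>x\<in>S. (\<Sum>b\<in>B. c b * f b x) * F (bas x) p)"
    by (rule lin_expand[OF l fS sg])
  also have "\<dots> = (\<Sum>b\<in>B. c b * (\<Sum>x\<in>S. f b x * F (bas x) p))"
    by (simp add: sum_distrib_right sum_distrib_left mult.assoc sum.swap[of _ S])
  also have "\<dots> = (\<Sum>b\<in>B. c b * F (f b) p)"
  proof (rule sum.cong[OF refl])
    fix b assume b: "b \<in> B"
    have "supp (f b) \<subseteq> S" using b by (auto simp: S_def)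
    thus "c b * (\<Sum>x\<in>S. f b x * F (bas x) p) = c b * F (f b) p"
      using lin_expand[OF l fS] by simp
  qed
  finally show ?thesis .
qed

lemma fa1:
  fixes qm qj qk A B C D :: "'a::field"
  assumes "qj \<noteq> 0"
  shows "(qm / qj * A * B) * (qj / qk * C * D) = qm / qk * (A * C) * (D * B)"
  using assms by (simp add: field_simps)

lemma fa2:
  fixes qm qij qi qj A B :: "'a::field"
  assumes "qij \<noteq> 0"
  shows "qm / qij * A * B * (qij / (qi * qj)) = qm / (qi * qj) * A * B"
  using assms by (simp add: field_simps)

lemma fa3:
  fixes qm ql qml qi qj A B C D :: "'a::field"
  assumes "ql \<noteq> 0" "qml \<noteq> 0"
  shows "qm / (ql * qml) * (ql / qi * A * B) * (qml / qj * C * D) = qm / (qi * qj) * A * D * (B * C)"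
  using assms by (simp add: field_simps)

lemma Phi_K_comp:
  assumes q: "qok q" and tX: "tri X" and tY: "tri Y" and c: "cinv Y X"
  shows "Phi q X Y (K q Y X (n, m)) (d, k) = (if (n, m) = (d, k) then 1 else 0)"
proof -
  define S where "S = {n..n + int m} \<times> {0..m}"
  have fS: "finite S" by (simp add: S_def)
  have "Phi q X Y (K q Y X (n, m)) (d, k) = (\<Sum>b\<in>S. K q Y X (n, m) b * K q X Y b (d, k))"
    by (rule Phi_superset[OF K_Hc[OF tY tX] fS]) (simp add: S_def supp_K[OF tY tX])
  also have "\<dots> = (\<Sum>e\<in>{n..n + int m}. \<Sum>j\<in>{0..m}. K q Y X (n, m) (e, j) * K q X Y (e, j) (d, k))"
    by (simp add: S_def sum.cartesian_product)
  also have "\<dots> = (\<Sum>e\<in>{n..n + int m}. qf q m / qf q k * (Y n e * X e d) *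
        (\<Sum>j\<in>{0..m}. Y (d + int k) (e + int j) * X (e + int j) (n + int m)))"
  proof -
    have kk: "K q Y X (n, m) (e, j) * K q X Y (e, j) (d, k) = qf q m / qf q k * (Y n e * X e d) * (Y (d + int k) (e + int j) * X (e + int j) (n + int m))" for e j
      unfolding K_def fst_conv snd_conv by (rule fa1[OF qf_nz[OF q]])
    show ?thesis by (simp only: kk sum_distrib_left)
  qed
  also have "\<dots> = (\<Sum>e\<in>{n..n + int m}. qf q m / qf q k * (Y n e * X e d) *
        (if d + int k = n + int m then 1 else 0))"
  proof (rule sum.cong[OF refl])
    fix e assume e: "e \<in> {n..n + int m}"
    show "qf q m / qf q k * (Y n e * X e d) * (\<Sum>j\<in>{0..m}. Y (d + int k) (e + int j) * X (e + int j) (n + int m))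
        = qf q m / qf q k * (Y n e * X e d) * (if d + int k = n + int m then 1 else 0)"
    proof (cases "Y n e * X e d = 0")
      case False
      hence "e \<le> d" using tri_zero[OF tX, of d e] by (auto simp: not_less[symmetric])
      hence "(\<Sum>j\<in>{0..m}. Y (d + int k) (e + int j) * X (e + int j) (n + int m)) = (if d + int k = n + int m then 1 else 0)"
        unfolding sum_shift[of "\<lambda>t. Y (d + int k) t * X t (n + int m)"]
        using conv_range[OF tY tX c, where lo=e and s="d + int k" and e="n + int m" and hi="e + int m"] e \<open>e \<le> d\<close>
        by auto
      thus ?thesis by simp
    qed simp
  qed
  also have "\<dots> = qf q m / qf q k * (if d + int k = n + int m then 1 else 0) * (\<Sum>e\<in>{n..n + int m}. Y n e * X e d)"
    by (cases "d + int k = n + int m") (simp_all only: simp_thms if_True if_False mult_1_right mult_zero_right mult_zero_left sum_distrib_left sum.neutral_const)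
  also have "\<dots> = (if (n, m) = (d, k) then 1 else 0)"
  proof (cases "d + int k = n + int m")
    case True
    hence "d \<le> n + int m" by simp
    hence "(\<Sum>e\<in>{n..n + int m}. Y n e * X e d) = (if n = d then 1 else 0)"
      using conv_range[OF tY tX c, where lo=n and s=n and e=d and hi="n + int m"] by auto
    thus ?thesis using True qf_nz[OF q] by auto
  qed auto
  finally show ?thesis .
qed

lemma Delta_lincomb:
  fixes f :: "'c \<Rightarrow> 'a::field hq" and c :: "'c \<Rightarrow> 'a"
  assumes fB: "finite B" and f: "\<And>b. b \<in> B \<Longrightarrow> f b \<in> Hc"
  shows "Delta q (\<lambda>p. \<Sum>b\<in>B. c b * f b p) P = (\<Sum>b\<in>B. c b * Delta q (f b) P)"
proof -
  define S where "S = (\<Union>b\<in>B. supp (f b))"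
  have fS: "finite S" and sg: "supp (\<lambda>p. \<Sum>b\<in>B. c b * f b p) \<subseteq> S"
    using lincomb_supp[OF fB f] by (auto simp: S_def)
  have "Delta q (\<lambda>p. \<Sum>b\<in>B. c b * f b p) P = (\<Sum>x\<in>S. (\<Sum>b\<in>B. c b * f b x) * Delta_bas q x P)"
    by (rule Delta_superset[OF fS sg])
  also have "\<dots> = (\<Sum>b\<in>B. c b * (\<Sum>x\<in>S. f b x * Delta_bas q x P))"
    by (simp add: sum_distrib_right sum_distrib_left mult.assoc sum.swap[of _ S])
  also have "\<dots> = (\<Sum>b\<in>B. c b * Delta q (f b) P)"
  proof (rule sum.cong[OF refl])
    fix b assume b: "b \<in> B"
    have sb: "supp (f b) \<subseteq> S" using b by (auto simp: S_def)
    show "c b * (\<Sum>x\<in>S. f b x * Delta_bas q x P) = c b * Delta q (f b) P"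
      using Delta_superset[OF fS sb, of q P] by simp
  qed
  finally show ?thesis .
qed

lemma tmap_lincomb:
  fixes g :: "'c \<Rightarrow> 'a::field hq2" and c :: "'c \<Rightarrow> 'a"
  assumes fB: "finite B" and g: "\<And>b. b \<in> B \<Longrightarrow> g b \<in> T2"
  shows "tmap F G (\<lambda>x. \<Sum>b\<in>B. c b * g b x) P = (\<Sum>b\<in>B. c b * tmap F G (g b) P)"
proof -
  define S where "S = (\<Union>b\<in>B. supp (g b))"
  have fS: "finite S" using fB g by (auto simp: S_def T2_def)
  have sg: "supp (\<lambda>x. \<Sum>b\<in>B. c b * g b x) \<subseteq> S"
  proof
    fix p assume "p \<in> supp (\<lambda>x. \<Sum>b\<in>B. c b * g b x)"
    hence "(\<Sum>b\<in>B. c b * g b p) \<noteq> 0" by (simp add: supp_def)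
    then obtain b where "b \<in> B" "c b * g b p \<noteq> 0" by (meson sum.not_neutral_contains_not_neutral)
    thus "p \<in> S" by (auto simp: supp_def S_def)
  qed
  have "tmap F G (\<lambda>x. \<Sum>b\<in>B. c b * g b x) P = (\<Sum>x\<in>S. (\<Sum>b\<in>B. c b * g b x) * F (bas (fst x)) (fst P) * G (bas (snd x)) (snd P))"
    by (rule tmap_superset[OF fS sg])
  also have "\<dots> = (\<Sum>b\<in>B. c b * (\<Sum>x\<in>S. g b x * F (bas (fst x)) (fst P) * G (bas (snd x)) (snd P)))"
    by (simp add: sum_distrib_right sum_distrib_left mult.assoc sum.swap[of _ S])
  also have "\<dots> = (\<Sum>b\<in>B. c b * tmap F G (g b) P)"
  proof (rule sum.cong[OF refl])
    fix b assume b: "b \<in> B"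
    have sb: "supp (g b) \<subseteq> S" using b by (auto simp: S_def)
    show "c b * (\<Sum>x\<in>S. g b x * F (bas (fst x)) (fst P) * G (bas (snd x)) (snd P)) = c b * tmap F G (g b) P"
      using tmap_superset[OF fS sb, of F G P] by simp
  qed
  finally show ?thesis .
qed

lemma Delta_K:
  assumes q: "qok q" and tX: "tri X" and tY: "tri Y" and c: "cinv Y X"
  shows "Delta q (K q X Y (n, m)) ((a, i), (e, j)) = tmap (Phi q X Y) (Phi q X Y) (Delta_bas q (n, m)) ((a, i), (e, j))"
proof -
  define C where "C = qf q m / (qf q i * qf q j) * X n a * Y (e + int j) (n + int m)"
  define S where "S = insert (a, i + j) ({n..n + int m} \<times> {0..m})"
  have fS: "finite S" by (simp add: S_def)
  have sS: "supp (K q X Y (n, m)) \<subseteq> S" using supp_K[OF tX tY, of q n m] by (auto simp: S_def)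
  have "Delta q (K q X Y (n, m)) ((a, i), (e, j)) = (\<Sum>b\<in>S. K q X Y (n, m) b * Delta_bas q b ((a, i), (e, j)))"
    by (rule Delta_superset[OF fS sS])
  also have "\<dots> = (\<Sum>b\<in>S. if b = (a, i + j) then (if e = a + int i then K q X Y (n, m) (a, i + j) * qb q i j else 0) else 0)"
  proof (rule sum.cong[OF refl])
    fix b assume "b \<in> S"
    obtain n' m' where b: "b = (n', m')" by (metis prod.collapse)
    show "K q X Y (n, m) b * Delta_bas q b ((a, i), (e, j)) = (if b = (a, i + j) then (if e = a + int i then K q X Y (n, m) (a, i + j) * qb q i j else 0) else 0)"
      unfolding b Delta_bas_formula[OF q] by auto
  qed
  also have "\<dots> = (if e = a + int i then K q X Y (n, m) (a, i + j) * qb q i j else 0)"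
    using fS by (simp add: sum.delta' S_def)
  also have "\<dots> = (if e = a + int i then C else 0)"
  proof (cases "e = a + int i")
    case True
    have "K q X Y (n, m) (a, i + j) * qb q i j = qf q m / qf q (i + j) * X n a * Y (a + int (i + j)) (n + int m) * (qf q (i + j) / (qf q i * qf q j))"
      by (simp add: K_def qb_def)
    also have "\<dots> = qf q m / (qf q i * qf q j) * X n a * Y (a + int (i + j)) (n + int m)"
      by (rule fa2[OF qf_nz[OF q]])
    finally show ?thesis using True by (simp add: C_def add.assoc)
  qed simp
  finally have L: "Delta q (K q X Y (n, m)) ((a, i), (e, j)) = (if e = a + int i then C else 0)" .
  define xl where "xl l = ((n, l), (n + int l, m - l))" for l
  have inj: "inj_on xl {0..m}" by (auto simp: inj_on_def xl_def)
  have sD: "supp (Delta_bas q (n, m)) \<subseteq> xl ` {0..m}"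
  proof
    fix p assume "p \<in> supp (Delta_bas q (n,m))"
    hence "Delta_bas q (n,m) p \<noteq> 0" by (simp add: supp_def)
    from Delta_bas_nz[OF q this] show "p \<in> xl ` {0..m}"
      by (intro image_eqI[of _ _ "snd (fst p)"]) (auto simp: prod_eq_iff xl_def)
  qed
  have "tmap (Phi q X Y) (Phi q X Y) (Delta_bas q (n, m)) ((a, i), (e, j))
     = (\<Sum>x\<in>xl ` {0..m}. Delta_bas q (n, m) x * Phi q X Y (bas (fst x)) (a, i) * Phi q X Y (bas (snd x)) (e, j))"
    using tmap_superset[OF _ sD] by simp
  also have "\<dots> = (\<Sum>l\<in>{0..m}. qb q l (m - l) * K q X Y (n, l) (a, i) * K q X Y (n + int l, m - l) (e, j))"
    unfolding sum.reindex[OF inj]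
    by (rule sum.cong[OF refl]) (auto simp: xl_def Phi_bas Delta_bas_formula[OF q])
  also have "\<dots> = (\<Sum>l\<in>{0..m}. C * (Y (a + int i) (n + int l) * X (n + int l) e))"
  proof (rule sum.cong[OF refl])
    fix l assume l: "l \<in> {0..m}"
    have e1: "qf q (l + (m - l)) = qf q m" "n + int l + int (m - l) = n + int m" using l by auto
    have "qb q l (m - l) * K q X Y (n, l) (a, i) * K q X Y (n + int l, m - l) (e, j)
      = qf q m / (qf q l * qf q (m - l)) * (qf q l / qf q i * X n a * Y (a + int i) (n + int l)) *
          (qf q (m - l) / qf q j * X (n + int l) e * Y (e + int j) (n + int m))"
      by (simp only: qb_def K_def fst_conv snd_conv e1)
    also have "\<dots> = C * (Y (a + int i) (n + int l) * X (n + int l) e)"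
      unfolding C_def by (rule fa3[OF qf_nz[OF q] qf_nz[OF q]])
    finally show "qb q l (m - l) * K q X Y (n, l) (a, i) * K q X Y (n + int l, m - l) (e, j)
      = C * (Y (a + int i) (n + int l) * X (n + int l) e)" .
  qed
  also have "\<dots> = C * (\<Sum>t\<in>{n..n + int m}. Y (a + int i) t * X t e)"
    by (simp only: sum_distrib_left[symmetric] sum_shift[of "\<lambda>t. Y (a + int i) t * X t e"])
  also have "\<dots> = (if e = a + int i then C else 0)"
  proof (cases "C = 0")
    case False
    hence "X n a \<noteq> 0" "Y (e + int j) (n + int m) \<noteq> 0" by (auto simp: C_def)
    hence "n \<le> a" "e + int j \<le> n + int m" using tri_zero[OF tX] tri_zero[OF tY] by (auto simp: not_less[symmetric])
    hence "(\<Sum>t\<in>{n..n + int m}. Y (a + int i) t * X t e) = (if a + int i = e then 1 else 0)"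
      using conv_range[OF tY tX c, where lo=n and s="a + int i" and e=e and hi="n + int m"] by auto
    thus ?thesis by auto
  qed simp
  finally show ?thesis using L by simp
qed

lemma Phi_fun: "h \<in> Hc \<Longrightarrow> Phi q X Y h = (\<lambda>p. \<Sum>b\<in>supp h. h b * K q X Y b p)"
  by (simp add: Phi_def)

lemma Phi_Delta:
  assumes q: "qok q" and tX: "tri X" and tY: "tri Y" and c: "cinv Y X" and h: "h \<in> Hc"
  shows "Delta q (Phi q X Y h) = tmap (Phi q X Y) (Phi q X Y) (Delta q h)"
proof
  fix P :: "idx \<times> idx"
  obtain a i e j where P: "P = ((a, i), (e, j))" by (metis prod.collapse)
  have fh: "finite (supp h)" using h by (simp add: Hc_def)
  have "Delta q (Phi q X Y h) P = (\<Sum>b\<in>supp h. h b * Delta q (K q X Y b) P)"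
    unfolding Phi_fun[OF h] by (rule Delta_lincomb[OF fh K_Hc[OF tX tY]])
  also have "\<dots> = (\<Sum>b\<in>supp h. h b * tmap (Phi q X Y) (Phi q X Y) (Delta_bas q b) P)"
  proof (rule sum.cong[OF refl])
    fix b :: idx
    obtain n m where b: "b = (n, m)" by (metis prod.collapse)
    show "h b * Delta q (K q X Y b) P = h b * tmap (Phi q X Y) (Phi q X Y) (Delta_bas q b) P"
      unfolding b P Delta_K[OF q tX tY c] ..
  qed
  also have "\<dots> = tmap (Phi q X Y) (Phi q X Y) (\<lambda>x. \<Sum>b\<in>supp h. h b * Delta_bas q b x) P"
    by (rule tmap_lincomb[OF fh Delta_bas_T2[OF q], symmetric])
  also have "(\<lambda>x. \<Sum>b\<in>supp h. h b * Delta_bas q b x) = Delta q h" by (simp add: Delta_def fun_eq_iff)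
  finally show "Delta q (Phi q X Y h) P = tmap (Phi q X Y) (Phi q X Y) (Delta q h) P" .
qed

lemma eps_superset:
  assumes fS: "finite S" and sS: "supp h \<subseteq> S"
  shows "eps h = (\<Sum>b\<in>S. if snd b = 0 then h b else 0)"
proof -
  define T where "T = {b\<in>S. snd b = 0 \<and> h b \<noteq> 0}"
  have "eps h = (\<Sum>b\<in>T. h b)"
    unfolding eps_def
    by (rule sum.reindex_bij_witness[where i="\<lambda>b. fst b" and j="\<lambda>n. (n, 0)"])
       (use sS in \<open>auto simp: T_def supp_def\<close>)
  also have "\<dots> = (\<Sum>b\<in>{b\<in>S. snd b = 0}. h b)"
    by (rule sum.mono_neutral_left) (use fS in \<open>auto simp: T_def\<close>)
  also have "\<dots> = (\<Sum>b\<in>S. if snd b = 0 then h b else 0)"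
    by (rule sum.inter_filter[OF fS])
  finally show ?thesis .
qed

lemma eps_lincomb:
  fixes f :: "'c \<Rightarrow> 'a::field hq" and c :: "'c \<Rightarrow> 'a"
  assumes fB: "finite B" and f: "\<And>b. b \<in> B \<Longrightarrow> f b \<in> Hc"
  shows "eps (\<lambda>p. \<Sum>b\<in>B. c b * f b p) = (\<Sum>b\<in>B. c b * eps (f b))"
proof -
  define S where "S = (\<Union>b\<in>B. supp (f b))"
  have fS: "finite S" and sg: "supp (\<lambda>p. \<Sum>b\<in>B. c b * f b p) \<subseteq> S"
    using lincomb_supp[OF fB f] by (auto simp: S_def)
  have "eps (\<lambda>p. \<Sum>b\<in>B. c b * f b p) = (\<Sum>x\<in>S. if snd x = 0 then (\<Sum>b\<in>B. c b * f b x) else 0)"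
    by (rule eps_superset[OF fS sg])
  also have "\<dots> = (\<Sum>x\<in>S. \<Sum>b\<in>B. c b * (if snd x = 0 then f b x else 0))"
    by (rule sum.cong[OF refl]) simp
  also have "\<dots> = (\<Sum>b\<in>B. c b * (\<Sum>x\<in>S. if snd x = 0 then f b x else 0))"
    by (simp add: sum_distrib_left sum.swap[of _ S])
  also have "\<dots> = (\<Sum>b\<in>B. c b * eps (f b))"
  proof (rule sum.cong[OF refl])
    fix b assume b: "b \<in> B"
    have sb: "supp (f b) \<subseteq> S" using b by (auto simp: S_def)
    show "c b * (\<Sum>x\<in>S. if snd x = 0 then f b x else 0) = c b * eps (f b)"
      using eps_superset[OF fS sb] by simp
  qed
  finally show ?thesis .
qed

lemma eps_K:
  assumes q: "qok q" and tX: "tri X" and tY: "tri Y" and c: "cinv X Y"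
  shows "eps (K q X Y (n, m)) = (if m = 0 then 1 else 0)"
proof -
  define S where "S = {n..n + int m} \<times> {0..m}"
  have "eps (K q X Y (n, m)) = (\<Sum>b\<in>S. if snd b = 0 then K q X Y (n, m) b else 0)"
    by (rule eps_superset) (auto simp: S_def supp_K[OF tX tY])
  also have "\<dots> = (\<Sum>t\<in>{n..n + int m}. \<Sum>j\<in>{0..m}. if j = 0 then K q X Y (n, m) (t, j) else 0)"
    unfolding S_def sum.cartesian_product by (rule sum.cong[OF refl]) auto
  also have "\<dots> = (\<Sum>t\<in>{n..n + int m}. qf q m * (X n t * Y t (n + int m)))"
    by (rule sum.cong[OF refl]) (simp add: K_def)
  also have "\<dots> = qf q m * (if n = n + int m then 1 else 0)"
    unfolding sum_distrib_left[symmetric]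
    using conv_range[OF tX tY c, where lo=n and s=n and e="n + int m" and hi="n + int m"] by simp
  also have "\<dots> = (if m = 0 then 1 else 0)" by simp
  finally show ?thesis .
qed

lemma Phi_eps:
  assumes q: "qok q" and tX: "tri X" and tY: "tri Y" and c: "cinv X Y" and h: "h \<in> Hc"
  shows "eps (Phi q X Y h) = eps h"
proof -
  have fh: "finite (supp h)" using h by (simp add: Hc_def)
  have "eps (Phi q X Y h) = (\<Sum>b\<in>supp h. h b * eps (K q X Y b))"
    unfolding Phi_fun[OF h] by (rule eps_lincomb[OF fh K_Hc[OF tX tY]])
  also have "\<dots> = (\<Sum>b\<in>supp h. if snd b = 0 then h b else 0)"
  proof (rule sum.cong[OF refl])
    fix b :: idx
    obtain n m where b: "b = (n, m)" by (metis prod.collapse)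
    show "h b * eps (K q X Y b) = (if snd b = 0 then h b else 0)"
      unfolding b eps_K[OF q tX tY c] by simp
  qed
  also have "\<dots> = eps h" by (rule eps_superset[OF fh order_refl, symmetric])
  finally show ?thesis .
qed

lemma Phi_inv:
  assumes q: "qok q" and tX: "tri X" and tY: "tri Y" and c: "cinv Y X" and h: "h \<in> Hc"
  shows "Phi q X Y (Phi q Y X h) = h"
proof
  fix p :: idx
  obtain d k where p: "p = (d, k)" by (metis prod.collapse)
  have fh: "finite (supp h)" using h by (simp add: Hc_def)
  have "Phi q X Y (Phi q Y X h) p = (\<Sum>b\<in>supp h. h b * Phi q X Y (K q Y X b) p)"
    unfolding Phi_fun[OF h, of q Y X] by (rule lincomb_linear[OF Phi_linear[OF tX tY] fh K_Hc[OF tY tX]])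
  also have "\<dots> = (\<Sum>b\<in>supp h. if b = p then h b else 0)"
  proof (rule sum.cong[OF refl])
    fix b :: idx
    obtain n m where b: "b = (n, m)" by (metis prod.collapse)
    show "h b * Phi q X Y (K q Y X b) p = (if b = p then h b else 0)"
      unfolding b p Phi_K_comp[OF q tX tY c] by simp
  qed
  also have "\<dots> = h p" using fh by (simp add: sum.delta') (auto simp: supp_def)
  finally show "Phi q X Y (Phi q Y X h) p = h p" .
qed

lemma Phi_Aut:
  assumes q: "qok q" and tX: "tri X" and tY: "tri Y" and c1: "cinv X Y" and c2: "cinv Y X"
  shows "Phi q X Y \<in> Aut_c q"
proof -
  have ext: "Phi q X Y \<in> extensional Hc" by (simp add: Phi_def)
  have bij: "bij_betw (Phi q X Y) Hc Hc"
    by (rule bij_betw_byWitness[where f'="Phi q Y X"])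
       (use Phi_inv[OF q tX tY c2] Phi_inv[OF q tY tX c1] Phi_Hc[OF tX tY] Phi_Hc[OF tY tX] in auto)
  show ?thesis unfolding Aut_c_def
    using ext bij Phi_linear[OF tX tY] Phi_Delta[OF q tX tY c2] Phi_eps[OF q tX tY c1] by blast
qed

definition Ua :: "(int \<Rightarrow> 'a::field) \<Rightarrow> int \<Rightarrow> int \<Rightarrow> 'a" where
  "Ua \<alpha> s e = (if s \<le> e then (-1) ^ nat (e - s) * (\<Prod>k\<in>{s..<e}. \<alpha> k) else 0)"

definition Va :: "(int \<Rightarrow> 'a::field) \<Rightarrow> int \<Rightarrow> int \<Rightarrow> 'a" where
  "Va \<alpha> s e = (if e = s then 1 else 0) + (if e = s + 1 then \<alpha> s else 0)"

lemma tri_Ua: "tri (Ua \<alpha>)" by (simp add: tri_def Ua_def)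
lemma tri_Va: "tri (Va \<alpha>)" by (simp add: tri_def Va_def)

lemma Ua_same[simp]: "Ua \<alpha> s s = 1" by (simp add: Ua_def)

lemma Ua_left:
  assumes "s < e" shows "Ua \<alpha> s e = - \<alpha> s * Ua \<alpha> (s + 1) e"
proof -
  have I: "{s..<e} = insert s {s + 1..<e}" using assms by auto
  have N: "nat (e - s) = Suc (nat (e - (s + 1)))" using assms by auto
  show ?thesis using assms unfolding Ua_def I N by simp
qed

lemma Ua_right:
  assumes "s < e" shows "Ua \<alpha> s e = - Ua \<alpha> s (e - 1) * \<alpha> (e - 1)"
proof -
  have I: "{s..<e} = insert (e - 1) {s..<e - 1}" using assms by auto
  have N: "nat (e - s) = Suc (nat (e - 1 - s))" using assms by auto
  show ?thesis using assms unfolding Ua_def I N by (simp add: mult_ac)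
qed

lemma cinv_UV: "cinv (Ua \<alpha>) (Va \<alpha>)"
  unfolding cinv_def
proof (intro allI impI)
  fix s e :: int assume se: "s \<le> e"
  have "(\<Sum>t\<in>{s..e}. Ua \<alpha> s t * Va \<alpha> t e) = (\<Sum>t\<in>{s..e}. (if t = e then Ua \<alpha> s t else 0) + (if t = e - 1 then Ua \<alpha> s t * \<alpha> t else 0))"
    by (rule sum.cong[OF refl]) (auto simp: Va_def)
  also have "\<dots> = Ua \<alpha> s e + (if s \<le> e - 1 then Ua \<alpha> s (e - 1) * \<alpha> (e - 1) else 0)"
    using se by (simp add: sum.distrib)
  also have "\<dots> = (if s = e then 1 else 0)"
    using se Ua_right[of s e \<alpha>] by auto
  finally show "(\<Sum>t\<in>{s..e}. Ua \<alpha> s t * Va \<alpha> t e) = (if s = e then 1 else 0)" .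
qed

lemma cinv_VU: "cinv (Va \<alpha>) (Ua \<alpha>)"
  unfolding cinv_def
proof (intro allI impI)
  fix s e :: int assume se: "s \<le> e"
  have "(\<Sum>t\<in>{s..e}. Va \<alpha> s t * Ua \<alpha> t e) = (\<Sum>t\<in>{s..e}. (if t = s then Ua \<alpha> t e else 0) + (if t = s + 1 then \<alpha> s * Ua \<alpha> t e else 0))"
    by (rule sum.cong[OF refl]) (auto simp: Va_def)
  also have "\<dots> = Ua \<alpha> s e + (if s + 1 \<le> e then \<alpha> s * Ua \<alpha> (s + 1) e else 0)"
    using se by (simp add: sum.distrib)
  also have "\<dots> = (if s = e then 1 else 0)"
    using se Ua_left[of s e \<alpha>] by auto
  finally show "(\<Sum>t\<in>{s..e}. Va \<alpha> s t * Ua \<alpha> t e) = (if s = e then 1 else 0)" .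
qed

lemma K0:
  "K q (Ua \<alpha>) (Va \<alpha>) (n, 0) = bas (n, 0)"
proof
  fix p :: idx
  obtain c j where p: "p = (c, j)" by (metis prod.collapse)
  show "K q (Ua \<alpha>) (Va \<alpha>) (n, 0) p = bas (n, 0) p"
  proof (cases "c < n")
    case True thus ?thesis by (simp add: p K_def Ua_def bas_def)
  next
    case False
    thus ?thesis by (auto simp: p K_def Va_def bas_def)
  qed
qed

lemma K1:
  assumes q: "qok q"
  shows "K q (Ua \<alpha>) (Va \<alpha>) (n, 1) = hadd (bas (n, 1)) (hscale (- \<alpha> n) (Dn n))"
proof
  fix p :: idx
  obtain c j where p: "p = (c, j)" by (metis prod.collapse)
  have Un1: "Ua \<alpha> n (n + 1) = - \<alpha> n" using Ua_left[of n "n+1" \<alpha>] by simp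
  have R: "hadd (bas (n, 1)) (hscale (- \<alpha> n) (Dn n)) (c, j) =
     (if (c, j) = (n, 1) then 1 else 0) + (- \<alpha> n) * ((if (c, j) = (n + 1, 0) then 1 else 0) - (if (c, j) = (n, 0) then 1 else 0))"
    by (simp add: hadd_def hscale_def Dn_def hsub_def bas_def)
  have L: "K q (Ua \<alpha>) (Va \<alpha>) (n, 1) (c, j) = 1 / qf q j * Ua \<alpha> n c * Va \<alpha> (c + int j) (n + 1)"
    unfolding K_def fst_conv snd_conv qf_1 by simp
  consider "c < n" | "c = n \<and> j = 0" | "c = n \<and> j = 1" | "c = n + 1 \<and> j = 0"
    | "n \<le> c \<and> \<not> (c = n \<and> j = 0) \<and> \<not> (c = n \<and> j = 1) \<and> \<not> (c = n + 1 \<and> j = 0)" by linarith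
  thus "K q (Ua \<alpha>) (Va \<alpha>) (n, 1) p = hadd (bas (n, 1)) (hscale (- \<alpha> n) (Dn n)) p"
  proof cases
    case 1 thus ?thesis unfolding p L R by (simp add: Ua_def)
  next
    case 2 thus ?thesis unfolding p L R by (simp add: Va_def)
  next
    case 3
    have "qf q (Suc 0) = 1" by (simp add: qf_def qn_def)
    thus ?thesis using 3 unfolding p L R by (simp add: Va_def)
  next
    case 4 thus ?thesis unfolding p L R by (simp add: Va_def Un1)
  next
    case 5
    hence "Va \<alpha> (c + int j) (n + 1) = 0" by (auto simp: Va_def)
    thus ?thesis using 5 unfolding p L R by auto
  qed
qed

lemma f1_surj':
  assumes q: "qok q"
  shows "\<exists>\<phi>\<in>Aut_star q. f1 \<phi> = \<beta>"
proof -
  define \<alpha> where "\<alpha> n = - \<beta> n" for n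
  define \<phi> where "\<phi> = Phi q (Ua \<alpha>) (Va \<alpha>)"
  have A: "\<phi> \<in> Aut_c q" unfolding \<phi>_def by (rule Phi_Aut[OF q tri_Ua tri_Va cinv_UV cinv_VU])
  have b0: "\<phi> (bas (n, 0)) = bas (n, 0)" for n by (simp add: \<phi>_def Phi_bas K0)
  have b1: "\<phi> (bas (n, 1)) = hadd (bas (n, 1)) (hscale (\<beta> n) (Dn n))" for n
    unfolding \<phi>_def Phi_bas K1[OF q] by (simp add: \<alpha>_def)
  have "\<phi> \<in> Aut_star q" using A b0 b1 by (auto simp: Aut_star_def Dn_def)
  moreover have "f1 \<phi> = \<beta>" using f1_eq[of \<phi> _ "\<beta> _", OF b1] by auto
  ultimately show ?thesis by blast
qed


theorem proposition3p4:
  fixes q :: "'a::field"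
  assumes "q \<noteq> 0"
    and "\<forall>n::nat. n > 0 \<longrightarrow> q ^ n \<noteq> 1"
  shows "group (AutcGroup q) \<and> subgroup (Aut_star q) (AutcGroup q)
    \<and> f1 \<in> epi ((AutcGroup q)\<lparr>carrier := Aut_star q\<rparr>) SeqGroup
    \<and> kernel ((AutcGroup q)\<lparr>carrier := Aut_star q\<rparr>) SeqGroup f1 = Aut_1 q"
proof -
  have q: "qok q" using assms by (simp add: qok_def)
  have "x \<in> f1 ` Aut_star q" for x using f1_surj'[OF q, of x] by force
  hence "f1 ` Aut_star q = UNIV" by auto
  hence "f1 \<in> epi ((AutcGroup q)\<lparr>carrier := Aut_star q\<rparr>) SeqGroup"
    using f1_hom[OF q] by (simp add: epi_def SeqGroup_def)
  thus ?thesis using Autc_group[OF q] star_sub[OF q] kernel_eq[OF q] by blast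
qed


end
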